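(* Let $(\mathcal{A},\varphi)$ be a tracial noncommutative probability space with universal enveloping traffic space $(\mathcal{G}(\mathcal{A}),\psi)$. For any graph monomial $t\in\mathcal{G}(\mathcal{A})$ there exists a partition $\pi$ of its vertex set such that the quotient $t^\pi$ is a quasi-cactus and $t^\pi\equiv t\pmod\psi$.
   Context: $(\mathcal{A},\varphi)$: unital complex algebra with unital tracial linear functional; free cumulants $\kappa_n$ determined by $\varphi(a_1\cdots a_n)=\sum_{\pi\in NC(n)}\prod_{B\in\pi}\kappa_{|B|}[(a_i)_{i\in B}]$. A graph monomial in $\mathcal{A}$ is a finite connected directed multigraph (loops, parallel edges allowed) with distinguished, not necessarily distinct, vertices $v_{\mathrm{in}},v_{\mathrm{out}}$ and edge labels in $\mathcal{A}$, up to isomorphism; $t^\pi$ identifies vertices in each block of $\pi$ (input/output become their images). $\iota(a)$: two vertices, one edge from $v_{\mathrm{in}}$ to $v_{\mathrm{out}}$ labelled $a$. Substitution $Z_g(t_1,\dots,t_K)$ for a connected bi-rooted multidigraph $g$ with ordered edges $e_1,\dots,e_K$ replaces each $e_i$ by a copy of $t_i$, identifying $\mathrm{src}(e_i)$ with the input and $\mathrm{tgt}(e_i)$ with the output of $t_i$; the product $t_1t_2$ identifies the input of $t_1$ with the output of $t_2$. $\mathcal{G}(\mathcal{A})$ is the span of graph monomials modulo the span of $Z_g(\iota(a_1),\dots,\iota(a_K))-Z_g(P(\iota(b_1),\dots,\iota(b_n)),\iota(a_2),\dots)$ (any edge position) for $a_1=P(b_1,\dots,b_n)$, $P$ a noncommutative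 polynomial. A test graph is a finite connected directed multigraph with labels in $\mathcal{A}$. Cactus: connected multigraph with each edge in exactly one simple cycle (loops, pairs of parallel edges count); pads = these cycles; oriented cactus: every pad directed. $\tau^0_\varphi[T]=\prod_{C\in\mathrm{Pads}(T)}\kappa_{n_C}[\gamma(e_1),\dots,\gamma(e_{n_C})]$ for oriented cacti (edges listed with $\mathrm{src}(e_i)=\mathrm{tgt}(e_{i+1})$, indices mod $n_C$), else $0$; $\tau_\varphi[T]=\sum_\pi\tau^0_\varphi[T^\pi]$ over partitions of the vertex set. $\psi(t)=\tau_\varphi[\tilde\Delta(t)]$ where $\tilde\Delta(t)$ identifies input and output and forgets roots. $s\equiv t\pmod\psi$ means $\psi((s-t)u)=0$ for all $u$. A quasi-cactus is a multigraph in which $\lambda(v,w)\in\{1,2\}$ for all distinct vertices $v,w$, where $\lambda(v,w)$ is the minimal number of edges whose deletion disconnects $v$ and $w$ (equivalently every edge belongs to at most one simple cycle). *)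

theory Defs
  imports Complex_Main "HOL-Library.Disjoint_Sets"
begin

definition complex_algebra :: "(complex \<Rightarrow> 'a::ring_1 \<Rightarrow> 'a) \<Rightarrow> bool" where
  "complex_algebra sc \<longleftrightarrow>
     (\<forall>c d a. sc (c + d) a = sc c a + sc d a) \<and>
     (\<forall>c a b. sc c (a + b) = sc c a + sc c b) \<and>
     (\<forall>c d a. sc (c * d) a = sc c (sc d a)) \<and>
     (\<forall>a. sc 1 a = a) \<and>
     (\<forall>c a b. sc c (a * b) = sc c a * b) \<and>
     (\<forall>c a b. sc c (a * b) = a * sc c b)"

definition tracial_state :: "(complex \<Rightarrow> 'a::ring_1 \<Rightarrow> 'a) \<Rightarrow> ('a \<Rightarrow> complex) \<Rightarrow> bool" where
  "tracial_state sc \<phi> \<longleftrightarrow>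
     (\<forall>a b. \<phi> (a + b) = \<phi> a + \<phi> b) \<and>
     (\<forall>c a. \<phi> (sc c a) = c * \<phi> a) \<and>
     \<phi> 1 = 1 \<and>
     (\<forall>a b. \<phi> (a * b) = \<phi> (b * a))"

definition noncrossing :: "nat set set \<Rightarrow> bool" where
  "noncrossing P \<longleftrightarrow> (\<forall>B1\<in>P. \<forall>B2\<in>P. B1 \<noteq> B2 \<longrightarrow>
     \<not> (\<exists>a b c d. a < b \<and> b < c \<and> c < d \<and> a \<in> B1 \<and> c \<in> B1 \<and> b \<in> B2 \<and> d \<in> B2))"

definition NC :: "nat \<Rightarrow> nat set set set" where
  "NC n = {P. partition_on {0..<n} P \<and> noncrossing P}"

definition free_cumulants :: "('a::ring_1 \<Rightarrow> complex) \<Rightarrow> ('a list \<Rightarrow> complex) \<Rightarrow> bool" where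
  "free_cumulants \<phi> \<kappa> \<longleftrightarrow> (\<forall>as. as \<noteq> [] \<longrightarrow>
     \<phi> (prod_list as) =
       (\<Sum>P\<in>NC (length as). \<Prod>B\<in>P. \<kappa> (map (\<lambda>i. as ! i) (sorted_list_of_set B))))"

section \<open>Test graphs and graph monomials (concrete representatives, vertices and edges are naturals)\<close>

record 'a tgraph =
  tverts :: "nat set"
  tedges :: "nat set"
  tsrc :: "nat \<Rightarrow> nat"
  ttgt :: "nat \<Rightarrow> nat"
  tlab :: "nat \<Rightarrow> 'a"

record 'a gmon = "'a tgraph" +
  gin :: nat
  gout :: nat

definition adj :: "('a, 'b) tgraph_scheme \<Rightarrow> nat set \<Rightarrow> nat \<Rightarrow> nat \<Rightarrow> bool" where
  "adj G F v w \<longleftrightarrow> (\<exists>e \<in> tedges G - F.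
     (tsrc G e = v \<and> ttgt G e = w) \<or> (tsrc G e = w \<and> ttgt G e = v))"

definition tg_connected :: "('a, 'b) tgraph_scheme \<Rightarrow> bool" where
  "tg_connected G \<longleftrightarrow> tverts G \<noteq> {} \<and>
     (\<forall>v\<in>tverts G. \<forall>w\<in>tverts G. (adj G {})\<^sup>*\<^sup>* v w)"

definition tg_wf :: "('a, 'b) tgraph_scheme \<Rightarrow> bool" where
  "tg_wf G \<longleftrightarrow> finite (tverts G) \<and> finite (tedges G) \<and>
     (\<forall>e\<in>tedges G. tsrc G e \<in> tverts G \<and> ttgt G e \<in> tverts G) \<and> tg_connected G"

definition gm_wf :: "('a, 'b) gmon_scheme \<Rightarrow> bool" where
  "gm_wf t \<longleftrightarrow> tg_wf t \<and> gin t \<in> tverts t \<and> gout t \<in> tverts t"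

definition ucycle :: "('a, 'b) tgraph_scheme \<Rightarrow> nat list \<Rightarrow> nat list \<Rightarrow> bool" where
  "ucycle G es vs \<longleftrightarrow> es \<noteq> [] \<and> length vs = length es \<and> distinct es \<and> distinct vs \<and>
     set es \<subseteq> tedges G \<and> set vs \<subseteq> tverts G \<and>
     (\<forall>i<length es. {tsrc G (es ! i), ttgt G (es ! i)} = {vs ! i, vs ! (Suc i mod length es)})"

definition pads :: "('a, 'b) tgraph_scheme \<Rightarrow> nat set set" where
  "pads G = {C. \<exists>es vs. ucycle G es vs \<and> set es = C}"

definition is_cactus :: "('a, 'b) tgraph_scheme \<Rightarrow> bool" where
  "is_cactus G \<longleftrightarrow> tg_connected G \<and> (\<forall>e\<in>tedges G. \<exists>!C. C \<in> pads G \<and> e \<in> C)"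

definition dlisting :: "('a, 'b) tgraph_scheme \<Rightarrow> nat set \<Rightarrow> nat list \<Rightarrow> bool" where
  "dlisting G C es \<longleftrightarrow> distinct es \<and> set es = C \<and>
     (\<forall>i<length es. tsrc G (es ! i) = ttgt G (es ! (Suc i mod length es)))"

definition oriented_cactus :: "('a, 'b) tgraph_scheme \<Rightarrow> bool" where
  "oriented_cactus G \<longleftrightarrow> is_cactus G \<and> (\<forall>C\<in>pads G. \<exists>es. dlisting G C es)"

definition tau0 :: "('a list \<Rightarrow> complex) \<Rightarrow> ('a, 'b) tgraph_scheme \<Rightarrow> complex" where
  "tau0 \<kappa> G = (if oriented_cactus G
      then (\<Prod>C\<in>pads G. \<kappa> (map (tlab G) (SOME es. dlisting G C es)))
      else 0)"

definition qmap :: "nat set set \<Rightarrow> nat \<Rightarrow> nat" where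
  "qmap P v = Min (THE B. B \<in> P \<and> v \<in> B)"

definition vmap :: "(nat \<Rightarrow> nat) \<Rightarrow> ('a, 'b) tgraph_scheme \<Rightarrow> ('a, 'b) tgraph_scheme" where
  "vmap f G = G\<lparr>tverts := f ` tverts G, tsrc := f \<circ> tsrc G, ttgt := f \<circ> ttgt G\<rparr>"

definition quot :: "('a, 'b) tgraph_scheme \<Rightarrow> nat set set \<Rightarrow> ('a, 'b) tgraph_scheme" where
  "quot G P = vmap (qmap P) G"

definition gquot :: "'a gmon \<Rightarrow> nat set set \<Rightarrow> 'a gmon" where
  "gquot t P = (quot t P)\<lparr>gin := qmap P (gin t), gout := qmap P (gout t)\<rparr>"

definition tau :: "('a list \<Rightarrow> complex) \<Rightarrow> ('a, 'b) tgraph_scheme \<Rightarrow> complex" where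
  "tau \<kappa> G = (\<Sum>P\<in>{P. partition_on (tverts G) P}. tau0 \<kappa> (quot G P))"

definition gprod :: "'a gmon \<Rightarrow> 'a gmon \<Rightarrow> 'a gmon" where
  "gprod t1 t2 = (let f = (\<lambda>v. if v = 2 * gout t2 + 1 then 2 * gin t1 else v) in
     \<lparr>tverts = f ` ((\<lambda>v. 2 * v) ` tverts t1 \<union> (\<lambda>v. 2 * v + 1) ` tverts t2),
      tedges = (\<lambda>e. 2 * e) ` tedges t1 \<union> (\<lambda>e. 2 * e + 1) ` tedges t2,
      tsrc = (\<lambda>e. f (if even e then 2 * tsrc t1 (e div 2) else 2 * tsrc t2 (e div 2) + 1)),
      ttgt = (\<lambda>e. f (if even e then 2 * ttgt t1 (e div 2) else 2 * ttgt t2 (e div 2) + 1)),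
      tlab = (\<lambda>e. if even e then tlab t1 (e div 2) else tlab t2 (e div 2)),
      gin = f (2 * gin t2 + 1),
      gout = f (2 * gout t1)\<rparr>)"

definition delta :: "'a gmon \<Rightarrow> 'a tgraph" where
  "delta t = (let f = (\<lambda>v. if v = gout t then gin t else v) in
     \<lparr>tverts = f ` tverts t, tedges = tedges t, tsrc = f \<circ> tsrc t, ttgt = f \<circ> ttgt t,
      tlab = tlab t\<rparr>)"

definition psi :: "('a list \<Rightarrow> complex) \<Rightarrow> 'a gmon \<Rightarrow> complex" where
  "psi \<kappa> t = tau \<kappa> (delta t)"

text \<open>s == t (mod psi): psi((s - t) u) = 0 for all u; by (bi)linearity and since G(A) is
  spanned by graph monomials this is psi(s u) = psi(t u) for all graph monomials u.\<close>
definition cong_psi :: "('a list \<Rightarrow> complex) \<Rightarrow> 'a gmon \<Rightarrow> 'a gmon \<Rightarrow> bool" where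
  "cong_psi \<kappa> s t \<longleftrightarrow> (\<forall>u::'a gmon. gm_wf u \<longrightarrow> psi \<kappa> (gprod s u) = psi \<kappa> (gprod t u))"

definition lam :: "('a, 'b) tgraph_scheme \<Rightarrow> nat \<Rightarrow> nat \<Rightarrow> nat" where
  "lam G v w = Min {card F | F. F \<subseteq> tedges G \<and> \<not> (adj G F)\<^sup>*\<^sup>* v w}"

definition quasi_cactus :: "('a, 'b) tgraph_scheme \<Rightarrow> bool" where
  "quasi_cactus G \<longleftrightarrow> (\<forall>v\<in>tverts G. \<forall>w\<in>tverts G. v \<noteq> w \<longrightarrow> lam G v w \<in> {1, 2})"

end

theory Submission
  imports Defs
begin

section \<open>Partitions and qmap\<close>

lemma qmap_eq:
  assumes "partition_on A P" "B \<in> P" "x \<in> B"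
  shows "qmap P x = Min B"
proof -
  have d: "disjoint P" using partition_onD2[OF assms(1)] .
  have "(THE B. B \<in> P \<and> x \<in> B) = B"
  proof (rule the_equality)
    show "B \<in> P \<and> x \<in> B" using assms by auto
    fix B' assume "B' \<in> P \<and> x \<in> B'"
    then show "B' = B" using d assms by (auto simp: disjoint_def disjnt_def)
  qed
  then show ?thesis by (simp add: qmap_def)
qed

lemma part_block:
  assumes "partition_on A P" "x \<in> A"
  obtains B where "B \<in> P" "x \<in> B"
  using partition_onD1[OF assms(1)] assms(2) by auto

lemma part_block_props:
  assumes "partition_on A P" "finite A" "B \<in> P"
  shows "finite B" "B \<noteq> {}" "B \<subseteq> A" "Min B \<in> B"
proof -
  show "B \<subseteq> A" using partition_onD1[OF assms(1)] assms(3) by auto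
  then show fB: "finite B" using assms(2) finite_subset by auto
  show ne: "B \<noteq> {}" using partition_onD3[OF assms(1)] assms(3) by auto
  show "Min B \<in> B" using fB ne by simp
qed

lemma part_same_block:
  assumes "partition_on A P" "B1 \<in> P" "B2 \<in> P" "x \<in> B1" "x \<in> B2"
  shows "B1 = B2"
  using partition_onD2[OF assms(1)] assms by (auto simp: disjoint_def disjnt_def)

lemma qmap_mem_block:
  assumes "partition_on A P" "finite A" "B \<in> P" "x \<in> B"
  shows "qmap P x \<in> B"
  using qmap_eq[OF assms(1,3,4)] part_block_props[OF assms(1-3)] by simp

lemma qmap_mem:
  assumes "partition_on A P" "finite A" "x \<in> A"
  shows "qmap P x \<in> A"
proof -
  obtain B where "B \<in> P" "x \<in> B" using part_block[OF assms(1,3)] .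
  then show ?thesis using qmap_mem_block[OF assms(1,2)] part_block_props[OF assms(1,2)] by blast
qed

lemma qmap_eq_iff:
  assumes "partition_on A P" "finite A" "x \<in> A" "y \<in> A"
  shows "qmap P x = qmap P y \<longleftrightarrow> (\<exists>B\<in>P. x \<in> B \<and> y \<in> B)"
proof
  obtain B1 where b1: "B1 \<in> P" "x \<in> B1" using part_block[OF assms(1,3)] .
  obtain B2 where b2: "B2 \<in> P" "y \<in> B2" using part_block[OF assms(1,4)] .
  assume "qmap P x = qmap P y"
  then have "Min B1 = Min B2" using qmap_eq[OF assms(1)] b1 b2 by simp
  then have "B1 = B2" using part_same_block[OF assms(1) b1(1) b2(1)] part_block_props[OF assms(1,2)] b1 b2
    by metis
  then show "\<exists>B\<in>P. x \<in> B \<and> y \<in> B" using b1 b2 by auto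
next
  assume "\<exists>B\<in>P. x \<in> B \<and> y \<in> B"
  then show "qmap P x = qmap P y" using qmap_eq[OF assms(1)] by metis
qed

lemma qmap_idem:
  assumes "partition_on A P" "finite A" "x \<in> A"
  shows "qmap P (qmap P x) = qmap P x"
proof -
  obtain B where b: "B \<in> P" "x \<in> B" using part_block[OF assms(1,3)] .
  then have "qmap P x \<in> B" using qmap_mem_block[OF assms(1,2)] by auto
  then show ?thesis using qmap_eq[OF assms(1) b(1)] b by metis
qed

section \<open>Graph basics\<close>

definition wfg :: "('a, 'b) tgraph_scheme \<Rightarrow> bool" where
  "wfg G \<longleftrightarrow> finite (tverts G) \<and> finite (tedges G) \<and>
     (\<forall>e\<in>tedges G. tsrc G e \<in> tverts G \<and> ttgt G e \<in> tverts G)"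

lemma adj_sym: "adj G F a b = adj G F b a"
  unfolding adj_def by auto

lemma adj_alt: "adj G F a b \<longleftrightarrow> (\<exists>e\<in>tedges G - F. {tsrc G e, ttgt G e} = {a, b})"
  unfolding adj_def by (auto simp: doubleton_eq_iff)

lemma reach_sym:
  assumes "(adj G F)\<^sup>*\<^sup>* a b" shows "(adj G F)\<^sup>*\<^sup>* b a"
  using assms
proof (induction rule: rtranclp_induct)
  case base then show ?case by simp
next
  case (step y z)
  then have "adj G F z y" using adj_sym by metis
  then show ?case using step(3) by (rule converse_rtranclp_into_rtranclp)
qed

lemma reach_hom:
  assumes "(adj H F')\<^sup>*\<^sup>* a b"
    and "\<And>e. e \<in> tedges H - F' \<Longrightarrow> \<eta> e \<in> tedges K - F \<and> \<rho> (tsrc H e) = tsrc K (\<eta> e) \<and> \<rho> (ttgt H e) = ttgt K (\<eta> e)"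
  shows "(adj K F)\<^sup>*\<^sup>* (\<rho> a) (\<rho> b)"
  using assms(1)
proof (induction rule: rtranclp_induct)
  case base then show ?case by simp
next
  case (step y z)
  from step(2) obtain e where e: "e \<in> tedges H - F'"
    "(tsrc H e = y \<and> ttgt H e = z) \<or> (tsrc H e = z \<and> ttgt H e = y)"
    unfolding adj_def by blast
  have "adj K F (\<rho> y) (\<rho> z)" unfolding adj_def
    using assms(2)[OF e(1)] e(2) by (intro bexI[of _ "\<eta> e"]) auto
  then show ?case using step(3) by simp
qed

definition cut2 :: "('a, 'b) tgraph_scheme \<Rightarrow> nat \<Rightarrow> nat \<Rightarrow> bool" where
  "cut2 G v w \<longleftrightarrow> (\<exists>F. F \<subseteq> tedges G \<and> finite F \<and> card F \<le> 2 \<and> \<not> (adj G F)\<^sup>*\<^sup>* v w)"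

lemma cut2_hom:
  assumes "cut2 K (\<rho> a) (\<rho> b)" "inj_on \<eta> (tedges H)"
    and "\<And>e. e \<in> tedges H \<Longrightarrow> \<eta> e \<in> tedges K \<and> \<rho> (tsrc H e) = tsrc K (\<eta> e) \<and> \<rho> (ttgt H e) = ttgt K (\<eta> e)"
  shows "cut2 H a b"
proof -
  obtain F where F: "F \<subseteq> tedges K" "finite F" "card F \<le> 2" "\<not> (adj K F)\<^sup>*\<^sup>* (\<rho> a) (\<rho> b)"
    using assms(1) unfolding cut2_def by blast
  define F' where "F' = {e \<in> tedges H. \<eta> e \<in> F}"
  have inj: "inj_on \<eta> F'" using assms(2) unfolding F'_def by (auto intro: inj_on_subset)
  have sub: "\<eta> ` F' \<subseteq> F" unfolding F'_def by auto
  have fin: "finite F'" using inj sub F(2) finite_imageD finite_subset by metis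
  have "card F' \<le> card F" using card_inj_on_le[OF inj sub F(2)] .
  moreover have "\<not> (adj H F')\<^sup>*\<^sup>* a b"
  proof
    assume "(adj H F')\<^sup>*\<^sup>* a b"
    then have "(adj K F)\<^sup>*\<^sup>* (\<rho> a) (\<rho> b)"
      by (rule reach_hom) (use assms(3) in \<open>auto simp: F'_def\<close>)
    then show False using F(4) by simp
  qed
  ultimately show ?thesis unfolding cut2_def using fin F(3) by (intro exI[of _ F']) (auto simp: F'_def)
qed

definition ipath :: "('a, 'b) tgraph_scheme \<Rightarrow> nat set \<Rightarrow> nat list \<Rightarrow> nat list \<Rightarrow> bool" where
  "ipath G F vs es \<longleftrightarrow> length vs = Suc (length es) \<and>
     (\<forall>i<length es. es ! i \<in> tedges G - F \<and> {tsrc G (es ! i), ttgt G (es ! i)} = {vs ! i, vs ! Suc i})"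

lemma reach_spath:
  assumes "(adj G F)\<^sup>*\<^sup>* x y" "x \<in> tverts G"
    and wf: "\<And>e. e \<in> tedges G \<Longrightarrow> tsrc G e \<in> tverts G \<and> ttgt G e \<in> tverts G"
  shows "\<exists>vs es. ipath G F vs es \<and> vs ! 0 = x \<and> vs ! length es = y \<and> distinct vs \<and> distinct es
     \<and> set vs \<subseteq> tverts G"
  using assms(1)
proof (induction rule: rtranclp_induct)
  case base
  then show ?case using assms(2) by (intro exI[of _ "[x]"] exI[of _ "[]"]) (auto simp: ipath_def)
next
  case (step y z)
  then obtain vs es where P: "ipath G F vs es" "vs ! 0 = x" "vs ! length es = y" "distinct vs"
    "distinct es" "set vs \<subseteq> tverts G" by blast
  from step(2) obtain e where e: "e \<in> tedges G - F" "{tsrc G e, ttgt G e} = {y, z}"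
    unfolding adj_alt by blast
  have len: "length vs = Suc (length es)" using P(1) ipath_def by blast
  show ?case
  proof (cases "z \<in> set vs")
    case True
    then obtain j where j: "j < length vs" "vs ! j = z" by (auto simp: in_set_conv_nth)
    have "ipath G F (take (Suc j) vs) (take j es)"
      using P(1) j len unfolding ipath_def by auto
    moreover have "distinct (take (Suc j) vs)" "distinct (take j es)" using P by auto
    moreover have "set (take (Suc j) vs) \<subseteq> tverts G" using P(6) set_take_subset by fastforce
    ultimately show ?thesis using j len P(2)
      by (intro exI[of _ "take (Suc j) vs"] exI[of _ "take j es"]) auto
  next
    case False
    have zV: "z \<in> tverts G" using wf[of e] e by (auto simp: doubleton_eq_iff)
    have ene: "e \<notin> set es"
    proof
      assume "e \<in> set es"
      then obtain i where i: "i < length es" "es ! i = e" by (auto simp: in_set_conv_nth)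
      then have "{tsrc G e, ttgt G e} = {vs ! i, vs ! Suc i}" using P(1) unfolding ipath_def by auto
      then have "z \<in> {vs ! i, vs ! Suc i}" using e(2) by auto
      moreover have "vs ! i \<in> set vs" "vs ! Suc i \<in> set vs" using i len by auto
      ultimately have "z \<in> set vs" by auto
      then show False using False by simp
    qed
    have "ipath G F (vs @ [z]) (es @ [e])"
      unfolding ipath_def
    proof (rule conjI)
      show "length (vs @ [z]) = Suc (length (es @ [e]))" using len by simp
    next
      show "\<forall>i<length (es @ [e]). (es @ [e]) ! i \<in> tedges G - F \<and>
        {tsrc G ((es @ [e]) ! i), ttgt G ((es @ [e]) ! i)} = {(vs @ [z]) ! i, (vs @ [z]) ! Suc i}"
      proof (intro allI impI)
      fix i assume i: "i < length (es @ [e])"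
      show "(es @ [e]) ! i \<in> tedges G - F \<and>
        {tsrc G ((es @ [e]) ! i), ttgt G ((es @ [e]) ! i)} = {(vs @ [z]) ! i, (vs @ [z]) ! Suc i}"
      proof (cases "i < length es")
        case True
        then show ?thesis using P(1) len unfolding ipath_def by (auto simp: nth_append)
      next
        case False
        then have "i = length es" using i by simp
        then show ?thesis using e len P(3) by (auto simp: nth_append)
      qed
      qed
    qed
    moreover have "(vs @ [z]) ! 0 = x" using P(2) len by (simp add: nth_append)
    moreover have "(vs @ [z]) ! length (es @ [e]) = z" using len by (simp add: nth_append)
    ultimately show ?thesis using P False ene zV
      by (intro exI[of _ "vs @ [z]"] exI[of _ "es @ [e]"]) auto
  qed
qed

lemma ipath_reach:
  assumes "ipath G F vs es" "j \<le> length es"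
  shows "(adj G F)\<^sup>*\<^sup>* (vs ! 0) (vs ! j)"
  using assms(2)
proof (induction j)
  case 0 then show ?case by simp
next
  case (Suc j)
  then have "j < length es" by simp
  then have "adj G F (vs ! j) (vs ! Suc j)" using assms(1) unfolding ipath_def adj_alt by blast
  then show ?case using Suc by simp
qed

lemma ipath_drop1:
  assumes "ipath G F vs es" "es \<noteq> []"
  shows "ipath G F (tl vs) (tl es)"
  using assms unfolding ipath_def by (auto simp: nth_tl)

lemma mod_arith1:
  fixes i n :: nat assumes "i < n" shows "Suc ((i + n - 1) mod n) mod n = i"
proof -
  have "Suc ((i + n - 1) mod n) mod n = Suc (i + n - 1) mod n" by (simp add: mod_Suc_eq)
  also have "Suc (i + n - 1) = i + n" using assms by simp
  finally show ?thesis using assms by simp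
qed

lemma mod_arith2:
  fixes i j n :: nat assumes "i < n" "j < n" "Suc j mod n = i" shows "j = (i + n - 1) mod n"
proof (cases "Suc j < n")
  case True
  then have "i = Suc j" using assms by simp
  then show ?thesis using assms by simp
next
  case False
  then have "Suc j = n" using assms by simp
  then have "i = 0" using assms by simp
  then show ?thesis using \<open>Suc j = n\<close> by simp
qed

lemma mod_arith3:
  fixes i j n :: nat assumes "i < n" "j < n" "Suc j mod n = Suc i mod n" shows "j = i"
proof -
  have "Suc j mod n = (if Suc j = n then 0 else Suc j)" "Suc i mod n = (if Suc i = n then 0 else Suc i)"
    using assms by auto
  then show ?thesis using assms by (auto split: if_splits)
qed

lemma ucycle_other_edge:
  assumes uc: "ucycle K ces cvs" and i: "i < length ces"
    and v: "v \<in> {tsrc K (ces ! i), ttgt K (ces ! i)}"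
  obtains e' where "e' \<in> set ces" "v \<in> {tsrc K e', ttgt K e'}"
    "\<And>j. j < length ces \<Longrightarrow> v \<in> {tsrc K (ces ! j), ttgt K (ces ! j)} \<Longrightarrow> ces ! j = ces ! i \<or> ces ! j = e'"
proof -
  define n where "n = length ces"
  have len: "length cvs = n" and dist: "distinct cvs"
    using uc unfolding ucycle_def n_def by simp_all
  have ep: "\<And>k. k < n \<Longrightarrow> {tsrc K (ces ! k), ttgt K (ces ! k)} = {cvs ! k, cvs ! (Suc k mod n)}"
    using uc unfolding ucycle_def n_def by blast
  have n0: "0 < n" using i n_def by (cases ces) auto
  have inj: "\<And>a b. a < n \<Longrightarrow> b < n \<Longrightarrow> cvs ! a = cvs ! b \<Longrightarrow> a = b"
    using nth_eq_iff_index_eq[OF dist] len by auto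
  have vi: "v = cvs ! i \<or> v = cvs ! (Suc i mod n)" using ep[of i] i v n_def by blast
  have jcase: "\<And>j. j < n \<Longrightarrow> v \<in> {tsrc K (ces ! j), ttgt K (ces ! j)} \<Longrightarrow> v = cvs ! j \<or> v = cvs ! (Suc j mod n)"
    using ep by blast
  show ?thesis
  proof (cases "cvs ! i = v")
    case True
    define q where "q = (i + n - 1) mod n"
    have q: "q < n" using n0 q_def by simp
    have sq: "Suc q mod n = i" using mod_arith1 i n_def q_def by simp
    show ?thesis
    proof (rule that[of "ces ! q"])
      show "ces ! q \<in> set ces" using q n_def by simp
      show "v \<in> {tsrc K (ces ! q), ttgt K (ces ! q)}" using ep[OF q] sq True by simp
      fix j assume j: "j < length ces" "v \<in> {tsrc K (ces ! j), ttgt K (ces ! j)}"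
      from jcase[OF _ j(2)] j(1) n_def have "v = cvs ! j \<or> v = cvs ! (Suc j mod n)" by simp
      then show "ces ! j = ces ! i \<or> ces ! j = ces ! q"
      proof
        assume "v = cvs ! j" then have "j = i" using inj[of j i] True j i n_def by simp
        then show ?thesis by simp
      next
        assume "v = cvs ! (Suc j mod n)"
        then have "Suc j mod n = i" using inj[of "Suc j mod n" i] True i n0 n_def by simp
        then have "j = q" using mod_arith2[of i n j] i j n_def q_def by simp
        then show ?thesis by simp
      qed
    qed
  next
    case False
    then have vs: "v = cvs ! (Suc i mod n)" using vi by simp
    define q where "q = Suc i mod n"
    have q: "q < n" using n0 q_def by simp
    show ?thesis
    proof (rule that[of "ces ! q"])
      show "ces ! q \<in> set ces" using q n_def by simp
      show "v \<in> {tsrc K (ces ! q), ttgt K (ces ! q)}" using ep[OF q] vs q_def by simp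
      fix j assume j: "j < length ces" "v \<in> {tsrc K (ces ! j), ttgt K (ces ! j)}"
      from jcase[OF _ j(2)] j(1) n_def have "v = cvs ! j \<or> v = cvs ! (Suc j mod n)" by simp
      then show "ces ! j = ces ! i \<or> ces ! j = ces ! q"
      proof
        assume a: "v = cvs ! j"
        have "cvs ! j = cvs ! q" using a vs unfolding q_def by simp
        moreover have "j < n" using j n_def by simp
        ultimately have "j = q" using inj q by blast
        then show ?thesis by simp
      next
        assume "v = cvs ! (Suc j mod n)"
        then have "cvs ! (Suc j mod n) = cvs ! (Suc i mod n)" using vs by simp
        moreover have "Suc j mod n < n" "Suc i mod n < n" using n0 by simp_all
        ultimately have "Suc j mod n = Suc i mod n" using inj by blast
        then have "j = i" using mod_arith3[of i n j] i j n_def by simp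
        then show ?thesis by simp
      qed
    qed
  qed
qed

lemma cactus_cut2:
  assumes cac: "is_cactus K"
    and wf: "\<And>e. e \<in> tedges K \<Longrightarrow> tsrc K e \<in> tverts K \<and> ttgt K e \<in> tverts K"
    and v: "v \<in> tverts K" and w: "w \<in> tverts K" and vw: "v \<noteq> w"
  shows "cut2 K v w"
proof -
  have "(adj K {})\<^sup>*\<^sup>* v w" using cac v w unfolding is_cactus_def tg_connected_def by blast
  then obtain vs es where P: "ipath K {} vs es" "vs ! 0 = v" "vs ! length es = w" "distinct vs"
    "distinct es" "set vs \<subseteq> tverts K"
    using reach_spath[OF _ v wf] by blast
  have len: "length vs = Suc (length es)" using P(1) ipath_def by blast
  have ne: "es \<noteq> []" using P vw by (cases es) auto
  define e where "e = es ! 0"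
  define x1 where "x1 = vs ! 1"
  have eK: "e \<in> tedges K" and eep: "{tsrc K e, ttgt K e} = {v, x1}"
    using P(1,2) ne unfolding ipath_def e_def x1_def by auto
  have dv: "\<And>a. 0 < a \<Longrightarrow> a < length vs \<Longrightarrow> vs ! a \<noteq> v"
  proof
    fix a assume a: "0 < a" "a < length vs" "vs ! a = v"
    then have "vs ! a = vs ! 0" using P(2) by simp
    moreover have l0: "0 < length vs" using a(1,2) by linarith
    ultimately have "a = 0" using nth_eq_iff_index_eq[OF P(4) a(2) l0] by simp
    then show False using a by simp
  qed
  have x1v: "x1 \<noteq> v" using dv[of 1] len ne unfolding x1_def by simp
  have x1K: "x1 \<in> tverts K" using P(6) len ne unfolding x1_def by (metis One_nat_def Suc_less_eq length_greater_0_conv nth_mem subsetD)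
  obtain C where C: "C \<in> pads K" "e \<in> C" and Cu: "\<And>C'. C' \<in> pads K \<Longrightarrow> e \<in> C' \<Longrightarrow> C' = C"
    using cac eK unfolding is_cactus_def by metis
  obtain ces cvs where uc: "ucycle K ces cvs" "set ces = C" using C(1) unfolding pads_def by blast
  obtain i where i: "i < length ces" "ces ! i = e" using C(2) uc(2) by (auto simp: in_set_conv_nth)
  have vi: "v \<in> {tsrc K (ces ! i), ttgt K (ces ! i)}" using i(2) eep by auto
  obtain e' where e': "e' \<in> set ces" "v \<in> {tsrc K e', ttgt K e'}"
    and oth: "\<And>j. j < length ces \<Longrightarrow> v \<in> {tsrc K (ces ! j), ttgt K (ces ! j)} \<Longrightarrow> ces ! j = ces ! i \<or> ces ! j = e'"
    using ucycle_other_edge[OF uc(1) i(1) vi] by blast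
  define F where "F = {e, e'}"
  have FK: "F \<subseteq> tedges K" using eK e' uc unfolding F_def ucycle_def by auto
  have notreach: "\<not> (adj K F)\<^sup>*\<^sup>* v w"
  proof
    assume r: "(adj K F)\<^sup>*\<^sup>* v w"
    have P1: "ipath K F (tl vs) (tl es)"
      unfolding ipath_def
    proof (rule conjI)
      show "length (tl vs) = Suc (length (tl es))" using len ne by simp
      show "\<forall>k<length (tl es). tl es ! k \<in> tedges K - F \<and>
        {tsrc K (tl es ! k), ttgt K (tl es ! k)} = {tl vs ! k, tl vs ! Suc k}"
      proof (intro allI impI)
        fix k assume k: "k < length (tl es)"
        have k1: "Suc k < length es" using k by simp
        have A: "es ! Suc k \<in> tedges K"
          "{tsrc K (es ! Suc k), ttgt K (es ! Suc k)} = {vs ! Suc k, vs ! Suc (Suc k)}"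
          using P(1) k1 unfolding ipath_def by auto
        have "vs ! Suc k \<noteq> v" "vs ! Suc (Suc k) \<noteq> v" using dv len k1 by simp_all
        then have "v \<notin> {tsrc K (es ! Suc k), ttgt K (es ! Suc k)}" using A(2) by auto
        then have "es ! Suc k \<notin> F" using eep e'(2) unfolding F_def by auto
        then show "tl es ! k \<in> tedges K - F \<and>
          {tsrc K (tl es ! k), ttgt K (tl es ! k)} = {tl vs ! k, tl vs ! Suc k}"
          using A k1 len by (simp add: nth_tl)
      qed
    qed
    have "(adj K F)\<^sup>*\<^sup>* (tl vs ! 0) (tl vs ! length (tl es))" using ipath_reach[OF P1] by simp
    moreover have "tl vs ! 0 = x1" using len ne unfolding x1_def by (simp add: nth_tl)
    moreover have "tl vs ! length (tl es) = w" using len ne P(3) by (simp add: nth_tl)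
    ultimately have r1: "(adj K F)\<^sup>*\<^sup>* x1 w" by simp
    have "(adj K F)\<^sup>*\<^sup>* x1 v" using r1 reach_sym[OF r] by (rule rtranclp_trans)
    then obtain pvs pes where Q: "ipath K F pvs pes" "pvs ! 0 = x1" "pvs ! length pes = v"
      "distinct pvs" "distinct pes" "set pvs \<subseteq> tverts K"
      using reach_spath[OF _ x1K wf] by blast
    define m where "m = length pes"
    have plen: "length pvs = Suc m" using Q(1) ipath_def m_def by blast
    have m0: "0 < m" using Q(2,3) x1v m_def by (cases pes) auto
    have pe: "\<And>k. k < m \<Longrightarrow> pes ! k \<in> tedges K - F \<and>
        {tsrc K (pes ! k), ttgt K (pes ! k)} = {pvs ! k, pvs ! Suc k}"
      using Q(1) unfolding ipath_def m_def by blast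
    have pvs_ne: "pvs \<noteq> []" using plen by auto
    have lastv: "last pvs = v" using Q(3) plen pvs_ne m_def by (simp add: last_conv_nth)
    have pvs_split: "pvs = butlast pvs @ [v]" using pvs_ne lastv by (metis append_butlast_last_id)
    have dbl: "distinct (butlast pvs)" "v \<notin> set (butlast pvs)"
      using Q(4) pvs_split by (metis distinct_append distinct1_rotate rotate1.simps(2) disjoint_iff list.set_intros(1))+
    have lbl: "length (butlast pvs) = m" using plen by simp
    have nbl: "\<And>k. k < m \<Longrightarrow> butlast pvs ! k = pvs ! k" using lbl by (simp add: nth_butlast)
    define cv where "cv = v # butlast pvs"
    define ce where "ce = e # pes"
    have eF: "e \<in> F" unfolding F_def by simp
    have enp: "e \<notin> set pes"
    proof
      assume "e \<in> set pes"
      then obtain k where "k < m" "pes ! k = e" using m_def by (auto simp: in_set_conv_nth)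
      then show False using pe eF by auto
    qed
    have ucy: "ucycle K ce cv"
      unfolding ucycle_def
    proof (intro conjI)
      show "ce \<noteq> []" unfolding ce_def by simp
      show "length cv = length ce" unfolding cv_def ce_def using lbl m_def by simp
      show "distinct ce" unfolding ce_def using enp Q(5) by simp
      show "distinct cv" unfolding cv_def using dbl by simp
      show "set ce \<subseteq> tedges K" unfolding ce_def using eK pe m_def by (auto simp: in_set_conv_nth)
      show "set cv \<subseteq> tverts K" unfolding cv_def using v Q(6) by (auto dest: in_set_butlastD)
      show "\<forall>k<length ce. {tsrc K (ce ! k), ttgt K (ce ! k)} = {cv ! k, cv ! (Suc k mod length ce)}"
      proof (intro allI impI)
        fix k assume k: "k < length ce"
        have lce: "length ce = Suc m" unfolding ce_def m_def by simp
        show "{tsrc K (ce ! k), ttgt K (ce ! k)} = {cv ! k, cv ! (Suc k mod length ce)}"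
        proof (cases k)
          case 0
          have "cv ! 1 = x1" unfolding cv_def using nbl[of 0] m0 Q(2) by simp
          then show ?thesis using 0 eep lce m0 unfolding ce_def cv_def by simp
        next
          case (Suc j)
          have j: "j < m" using k lce Suc by simp
          have c1: "ce ! k = pes ! j" unfolding ce_def Suc by simp
          have c2: "cv ! k = pvs ! j" unfolding cv_def Suc using nbl[OF j] by simp
          have c3: "cv ! (Suc k mod length ce) = pvs ! Suc j"
          proof (cases "Suc j < m")
            case True
            then have "Suc k mod length ce = Suc (Suc j)" using lce Suc by simp
            then show ?thesis unfolding cv_def using nbl[OF True] by simp
          next
            case False
            then have "Suc j = m" using j by simp
            then have "Suc k mod length ce = 0" using lce Suc by simp
            then show ?thesis unfolding cv_def using Q(3) \<open>Suc j = m\<close> m_def by simp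
          qed
          show ?thesis using pe[OF j] c1 c2 c3 by simp
        qed
      qed
    qed
    then have "set ce \<in> pads K" unfolding pads_def by blast
    then have ceC: "set ce = C" using Cu unfolding ce_def by simp
    define g where "g = pes ! (m - 1)"
    have gm: "m - 1 < m" using m0 by simp
    have gF: "g \<notin> F" using pe[OF gm] unfolding g_def by simp
    have gv: "v \<in> {tsrc K g, ttgt K g}" using pe[OF gm] Q(3) m0 m_def unfolding g_def by simp
    have "g \<in> set pes" using gm m_def unfolding g_def by simp
    then have "g \<in> set ces" using uc(2) ceC unfolding ce_def by auto
    then obtain j where j: "j < length ces" "ces ! j = g" by (auto simp: in_set_conv_nth)
    from oth[OF j(1)] j(2) gv i(2) have "g = e \<or> g = e'" by simp
    then show False using gF unfolding F_def by auto
  qed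
  have "finite F" "card F \<le> 2" unfolding F_def by (auto simp: card_insert_if)
  then show ?thesis unfolding cut2_def using FK notreach by blast
qed

lemma suc_mod_lt: assumes "(i::nat) < n" shows "Suc i mod n < n"
proof -
  have "0 < n" using assms by simp
  then show ?thesis by simp
qed

lemma pads_sub: "C \<in> pads G \<Longrightarrow> C \<subseteq> tedges G"
  unfolding pads_def ucycle_def by auto

lemma tau0_cong:
  assumes v: "tverts G1 = tverts G2" and ed: "tedges G1 = tedges G2"
    and st: "\<And>e. e \<in> tedges G1 \<Longrightarrow> tsrc G1 e = tsrc G2 e \<and> ttgt G1 e = ttgt G2 e \<and> tlab G1 e = tlab G2 e"
  shows "tau0 \<kappa> G1 = tau0 \<kappa> G2"
proof -
  have adj: "adj G1 = adj G2"
  proof (intro ext)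
    fix F a b show "adj G1 F a b = adj G2 F a b"
      unfolding adj_def using st ed by auto
  qed
  have conn: "tg_connected G1 = tg_connected G2" by (simp add: tg_connected_def adj v)
  have uc: "ucycle G1 es vs = ucycle G2 es vs" for es vs
  proof -
    have k: "set es \<subseteq> tedges G1 \<Longrightarrow> i < length es \<Longrightarrow>
      tsrc G1 (es ! i) = tsrc G2 (es ! i) \<and> ttgt G1 (es ! i) = ttgt G2 (es ! i)" for i
      using st nth_mem by blast
    show ?thesis
    proof
      assume "ucycle G1 es vs" then show "ucycle G2 es vs" unfolding ucycle_def using k v ed by simp
    next
      assume "ucycle G2 es vs" then show "ucycle G1 es vs" unfolding ucycle_def using k v ed by simp
    qed
  qed
  have pads: "pads G1 = pads G2" unfolding pads_def using uc by simp
  have cac: "is_cactus G1 = is_cactus G2" unfolding is_cactus_def using conn pads ed by simp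
  have dl: "dlisting G1 C = dlisting G2 C" if "C \<subseteq> tedges G1" for C
  proof (intro ext)
    fix es
    have k: "set es = C \<Longrightarrow> i < length es \<Longrightarrow> tsrc G1 (es ! i) = tsrc G2 (es ! i) \<and>
        ttgt G1 (es ! (Suc i mod length es)) = ttgt G2 (es ! (Suc i mod length es))" for i
    proof -
      assume s: "set es = C" and i: "i < length es"
      have "Suc i mod length es < length es" using suc_mod_lt[OF i] .
      then have "es ! i \<in> tedges G1" "es ! (Suc i mod length es) \<in> tedges G1" using s i that nth_mem by blast+
      then show ?thesis using st by blast
    qed
    show "dlisting G1 C es = dlisting G2 C es" unfolding dlisting_def using k by auto
  qed
  have oc: "oriented_cactus G1 = oriented_cactus G2"
    unfolding oriented_cactus_def using cac pads dl pads_sub by metis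
  show ?thesis
  proof (cases "oriented_cactus G1")
    case True
    have "(\<Prod>C\<in>pads G1. \<kappa> (map (tlab G1) (SOME es. dlisting G1 C es))) =
          (\<Prod>C\<in>pads G2. \<kappa> (map (tlab G2) (SOME es. dlisting G2 C es)))"
    proof (rule prod.cong)
      show "pads G1 = pads G2" by (rule pads)
      fix C assume C: "C \<in> pads G2"
      then have C1: "C \<in> pads G1" "C \<subseteq> tedges G1" using pads pads_sub by auto
      have ex: "\<exists>es. dlisting G1 C es" using True C1 unfolding oriented_cactus_def by blast
      define es where "es = (SOME es. dlisting G1 C es)"
      have d: "dlisting G1 C es" unfolding es_def using someI_ex[OF ex] .
      have "set es \<subseteq> tedges G1" using d C1 unfolding dlisting_def by auto
      then have m: "map (tlab G1) es = map (tlab G2) es" using st by (intro map_cong) auto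
      have s2: "(SOME es. dlisting G2 C es) = es" unfolding es_def using dl[OF C1(2)] by simp
      show "\<kappa> (map (tlab G1) (SOME es. dlisting G1 C es)) = \<kappa> (map (tlab G2) (SOME es. dlisting G2 C es))"
        by (simp only: es_def[symmetric] s2 m)
    qed
    then show ?thesis unfolding tau0_def using True oc by simp
  next
    case False
    then show ?thesis unfolding tau0_def using oc by simp
  qed
qed

lemma vmap_simps[simp]:
  "tverts (vmap g H) = g ` tverts H" "tedges (vmap g H) = tedges H"
  "tsrc (vmap g H) = g \<circ> tsrc H" "ttgt (vmap g H) = g \<circ> ttgt H" "tlab (vmap g H) = tlab H"
  by (simp_all add: vmap_def)

lemma reach_lift:
  assumes "(adj (vmap g H) F)\<^sup>*\<^sup>* x y" "x = g a" "a \<in> tverts H"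
    and wf: "\<And>e. e \<in> tedges H \<Longrightarrow> tsrc H e \<in> tverts H \<and> ttgt H e \<in> tverts H"
    and inj: "inj_on g (tverts H)"
  shows "\<exists>b\<in>tverts H. y = g b \<and> (adj H F)\<^sup>*\<^sup>* a b"
  using assms(1)
proof (induction rule: rtranclp_induct)
  case base then show ?case using assms(2,3) by auto
next
  case (step y z)
  then obtain b where b: "b \<in> tverts H" "y = g b" "(adj H F)\<^sup>*\<^sup>* a b" by blast
  from step(2) obtain e where e: "e \<in> tedges H - F"
    "(g (tsrc H e) = y \<and> g (ttgt H e) = z) \<or> (g (tsrc H e) = z \<and> g (ttgt H e) = y)"
    unfolding adj_def by auto
  have sV: "tsrc H e \<in> tverts H" "ttgt H e \<in> tverts H" using wf e(1) by auto
  from e(2) show ?case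
  proof
    assume h: "g (tsrc H e) = y \<and> g (ttgt H e) = z"
    then have "tsrc H e = b" using inj_onD[OF inj] b sV by metis
    then have "adj H F b (ttgt H e)" using e(1) unfolding adj_def by auto
    then show ?case using b h sV by (intro bexI[of _ "ttgt H e"]) auto
  next
    assume h: "g (tsrc H e) = z \<and> g (ttgt H e) = y"
    then have "ttgt H e = b" using inj_onD[OF inj] b sV by metis
    then have "adj H F b (tsrc H e)" using e(1) unfolding adj_def by auto
    then show ?case using b h sV by (intro bexI[of _ "tsrc H e"]) auto
  qed
qed

lemma tau0_vmap_inj:
  assumes wf: "\<And>e. e \<in> tedges H \<Longrightarrow> tsrc H e \<in> tverts H \<and> ttgt H e \<in> tverts H"
    and inj: "inj_on g (tverts H)"
  shows "tau0 \<kappa> (vmap g H) = tau0 \<kappa> H"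
proof -
  let ?K = "vmap g H"
  have conn: "tg_connected ?K = tg_connected H"
  proof
    assume c: "tg_connected ?K"
    show "tg_connected H" unfolding tg_connected_def
    proof (intro conjI ballI)
      show "tverts H \<noteq> {}" using c unfolding tg_connected_def by simp
      fix a b assume ab: "a \<in> tverts H" "b \<in> tverts H"
      then have "(adj ?K {})\<^sup>*\<^sup>* (g a) (g b)" using c unfolding tg_connected_def by simp
      from reach_lift[OF this refl ab(1) wf inj] obtain b' where
        "b' \<in> tverts H" "g b = g b'" "(adj H {})\<^sup>*\<^sup>* a b'" by blast
      then show "(adj H {})\<^sup>*\<^sup>* a b" using inj_onD[OF inj] ab by metis
    qed
  next
    assume c: "tg_connected H"
    show "tg_connected ?K" unfolding tg_connected_def
    proof (intro conjI ballI)
      show "tverts ?K \<noteq> {}" using c unfolding tg_connected_def by simp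
      fix x y assume "x \<in> tverts ?K" "y \<in> tverts ?K"
      then obtain a b where ab: "a \<in> tverts H" "b \<in> tverts H" "x = g a" "y = g b" by auto
      have "(adj H {})\<^sup>*\<^sup>* a b" using c ab unfolding tg_connected_def by simp
      then have "(adj ?K {})\<^sup>*\<^sup>* (g a) (g b)" by (rule reach_hom) auto
      then show "(adj ?K {})\<^sup>*\<^sup>* x y" using ab by simp
    qed
  qed
  have uc1: "ucycle ?K es (map g vs)" if u: "ucycle H es vs" for es vs
  proof -
    have sV: "set vs \<subseteq> tverts H" using u unfolding ucycle_def by simp
    have "distinct (map g vs)" using u sV inj unfolding ucycle_def
      by (simp add: distinct_map inj_on_subset)
    moreover have "\<forall>i<length es. {tsrc ?K (es ! i), ttgt ?K (es ! i)} = {map g vs ! i, map g vs ! (Suc i mod length es)}"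
    proof (intro allI impI)
      fix i assume i: "i < length es"
      have l: "length vs = length es" using u unfolding ucycle_def by simp
      have "{tsrc H (es ! i), ttgt H (es ! i)} = {vs ! i, vs ! (Suc i mod length es)}"
        using u i unfolding ucycle_def by blast
      then have "g ` {tsrc H (es ! i), ttgt H (es ! i)} = g ` {vs ! i, vs ! (Suc i mod length es)}" by simp
      moreover have "Suc i mod length es < length es" using suc_mod_lt[OF i] .
      ultimately show "{tsrc ?K (es ! i), ttgt ?K (es ! i)} = {map g vs ! i, map g vs ! (Suc i mod length es)}"
        using i l by simp
    qed
    ultimately show ?thesis using u sV unfolding ucycle_def by auto
  qed
  have uc2: "\<exists>vs0. ucycle H es vs0" if u: "ucycle ?K es vs" for es vs
  proof -
    define h where "h = inv_into (tverts H) g"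
    define vs0 where "vs0 = map h vs"
    have sV: "set vs \<subseteq> g ` tverts H" using u unfolding ucycle_def by simp
    have gh: "\<And>x. x \<in> g ` tverts H \<Longrightarrow> g (h x) = x" unfolding h_def by (simp add: f_inv_into_f)
    have hV: "\<And>x. x \<in> g ` tverts H \<Longrightarrow> h x \<in> tverts H" unfolding h_def by (simp add: inv_into_into)
    have mg: "map g vs0 = vs" unfolding vs0_def using gh sV by (induction vs) auto
    have sV0: "set vs0 \<subseteq> tverts H" unfolding vs0_def using hV sV by auto
    have l: "length vs0 = length es" using u unfolding vs0_def ucycle_def by simp
    have "distinct vs0" using u mg unfolding ucycle_def by (metis distinct_map)
    moreover have "\<forall>i<length es. {tsrc H (es ! i), ttgt H (es ! i)} = {vs0 ! i, vs0 ! (Suc i mod length es)}"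
    proof (intro allI impI)
      fix i assume i: "i < length es"
      have i2: "Suc i mod length es < length es" using suc_mod_lt[OF i] .
      have eH: "es ! i \<in> tedges H" using u i unfolding ucycle_def by auto
      have "{tsrc ?K (es ! i), ttgt ?K (es ! i)} = {vs ! i, vs ! (Suc i mod length es)}"
        using u i unfolding ucycle_def by blast
      moreover have "vs ! i = g (vs0 ! i)" "vs ! (Suc i mod length es) = g (vs0 ! (Suc i mod length es))"
        using i i2 l by (simp_all add: mg[symmetric])
      ultimately have "g ` {tsrc H (es ! i), ttgt H (es ! i)} = g ` {vs0 ! i, vs0 ! (Suc i mod length es)}"
        by simp
      moreover have "{tsrc H (es ! i), ttgt H (es ! i)} \<subseteq> tverts H" using wf eH by auto
      moreover have "{vs0 ! i, vs0 ! (Suc i mod length es)} \<subseteq> tverts H" using sV0 i i2 l by auto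
      ultimately show "{tsrc H (es ! i), ttgt H (es ! i)} = {vs0 ! i, vs0 ! (Suc i mod length es)}"
        using inj_on_image_eq_iff[OF inj] by blast
    qed
    ultimately have "ucycle H es vs0" using u sV0 l unfolding ucycle_def by auto
    then show ?thesis by blast
  qed
  have pads: "pads ?K = pads H" unfolding pads_def using uc1 uc2 by blast
  have cac: "is_cactus ?K = is_cactus H" unfolding is_cactus_def using conn pads by simp
  have dl: "dlisting ?K C = dlisting H C" if "C \<subseteq> tedges H" for C
  proof (intro ext)
    fix es
    have "set es = C \<Longrightarrow> (\<forall>i<length es. g (tsrc H (es ! i)) = g (ttgt H (es ! (Suc i mod length es)))) =
        (\<forall>i<length es. tsrc H (es ! i) = ttgt H (es ! (Suc i mod length es)))"
    proof -
      assume s: "set es = C"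
      have "\<And>i. i < length es \<Longrightarrow> (g (tsrc H (es ! i)) = g (ttgt H (es ! (Suc i mod length es)))) =
         (tsrc H (es ! i) = ttgt H (es ! (Suc i mod length es)))"
      proof -
        fix i assume i: "i < length es"
        have i2: "Suc i mod length es < length es" using suc_mod_lt[OF i] .
        have "es ! i \<in> tedges H" "es ! (Suc i mod length es) \<in> tedges H" using s that i i2 nth_mem by blast+
        then have "tsrc H (es ! i) \<in> tverts H" "ttgt H (es ! (Suc i mod length es)) \<in> tverts H" using wf by auto
        then show "(g (tsrc H (es ! i)) = g (ttgt H (es ! (Suc i mod length es)))) =
         (tsrc H (es ! i) = ttgt H (es ! (Suc i mod length es)))" using inj_on_eq_iff[OF inj] by blast
      qed
      then show ?thesis by blast
    qed
    then show "dlisting ?K C es = dlisting H C es" unfolding dlisting_def by auto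
  qed
  have oc: "oriented_cactus ?K = oriented_cactus H"
  proof -
    have "(\<forall>C\<in>pads ?K. \<exists>es. dlisting ?K C es) = (\<forall>C\<in>pads H. \<exists>es. dlisting H C es)"
    proof -
      have "\<And>C. C \<in> pads H \<Longrightarrow> dlisting ?K C = dlisting H C" using dl pads_sub by blast
      then show ?thesis using pads by simp
    qed
    then show ?thesis unfolding oriented_cactus_def using cac by simp
  qed
  show ?thesis
  proof (cases "oriented_cactus H")
    case True
    have "(\<Prod>C\<in>pads ?K. \<kappa> (map (tlab ?K) (SOME es. dlisting ?K C es))) =
          (\<Prod>C\<in>pads H. \<kappa> (map (tlab H) (SOME es. dlisting H C es)))"
    proof (rule prod.cong)
      show "pads ?K = pads H" by (rule pads)
      fix C assume C: "C \<in> pads H"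
      then have "C \<subseteq> tedges H" using pads_sub by auto
      then show "\<kappa> (map (tlab ?K) (SOME es. dlisting ?K C es)) = \<kappa> (map (tlab H) (SOME es. dlisting H C es))"
        using dl by simp
    qed
    then show ?thesis unfolding tau0_def using True oc by simp
  next
    case False
    then show ?thesis unfolding tau0_def using oc by simp
  qed
qed

definition pullp :: "(nat \<Rightarrow> nat) \<Rightarrow> nat set \<Rightarrow> nat set set \<Rightarrow> nat set set" where
  "pullp k V R' = (\<lambda>B. {x \<in> V. k x \<in> B}) ` R'"

definition coarse :: "(nat \<Rightarrow> nat) \<Rightarrow> nat set \<Rightarrow> nat set set set" where
  "coarse k V = {R. partition_on V R \<and> (\<forall>a\<in>V. \<forall>b\<in>V. k a = k b \<longrightarrow> qmap R a = qmap R b)}"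

lemma pullp_mem: "B \<in> R' \<Longrightarrow> {x \<in> V. k x \<in> B} \<in> pullp k V R'"
  unfolding pullp_def by (rule imageI)

lemma pullp_part:
  assumes "partition_on (k ` V) R'"
  shows "partition_on V (pullp k V R')"
proof (rule partition_onI)
  show "\<Union>(pullp k V R') = V"
  proof
    show "\<Union>(pullp k V R') \<subseteq> V" unfolding pullp_def by auto
    show "V \<subseteq> \<Union>(pullp k V R')"
    proof
      fix x assume x: "x \<in> V"
      have "k x \<in> k ` V" using x by simp
      then obtain B where "B \<in> R'" "k x \<in> B" by (rule part_block[OF assms])
      then show "x \<in> \<Union>(pullp k V R')" using x pullp_mem by blast
    qed
  qed
next
  fix p q assume "p \<in> pullp k V R'" "q \<in> pullp k V R'" "p \<noteq> q"
  then obtain B1 B2 where b: "B1 \<in> R'" "B2 \<in> R'" "p = {x \<in> V. k x \<in> B1}" "q = {x \<in> V. k x \<in> B2}"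
    unfolding pullp_def by auto
  then have "B1 \<noteq> B2" using \<open>p \<noteq> q\<close> by auto
  then have "B1 \<inter> B2 = {}" using partition_onD2[OF assms] b by (auto simp: disjoint_def)
  then show "disjnt p q" using b by (auto simp: disjnt_def)
next
  show "{} \<notin> pullp k V R'"
  proof
    assume "{} \<in> pullp k V R'"
    then obtain B where B: "B \<in> R'" "{x \<in> V. k x \<in> B} = {}" unfolding pullp_def by auto
    have "B \<noteq> {}" "B \<subseteq> k ` V" using partition_onD3[OF assms] partition_onD1[OF assms] B(1) by auto
    then obtain x where "x \<in> V" "k x \<in> B" by auto
    then show False using B(2) by auto
  qed
qed

lemma pullp_coarse:
  assumes "partition_on (k ` V) R'" "finite V"
  shows "pullp k V R' \<in> coarse k V"
proof -
  have P: "partition_on V (pullp k V R')" by (rule pullp_part[OF assms(1)])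
  have "qmap (pullp k V R') a = qmap (pullp k V R') b" if ab: "a \<in> V" "b \<in> V" "k a = k b" for a b
  proof -
    have "k a \<in> k ` V" using ab by simp
    then obtain B where "B \<in> R'" "k a \<in> B" using partition_onD1[OF assms(1)] by blast
    define C where "C = {x \<in> V. k x \<in> B}"
    have C: "C \<in> pullp k V R'" "a \<in> C" "b \<in> C"
      unfolding C_def using ab pullp_mem \<open>B \<in> R'\<close> \<open>k a \<in> B\<close> by auto
    have "\<exists>B\<in>pullp k V R'. a \<in> B \<and> b \<in> B" using C by (intro bexI[of _ C]) simp_all
    then show ?thesis using qmap_eq_iff[OF P assms(2) ab(1,2)] by simp
  qed
  then show ?thesis unfolding coarse_def using P by blast
qed

lemma image_part:
  assumes "R \<in> coarse k V" "finite V"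
  shows "partition_on (k ` V) ((`) k ` R)"
proof -
  have P: "partition_on V R" and ker: "\<And>a b. a \<in> V \<Longrightarrow> b \<in> V \<Longrightarrow> k a = k b \<Longrightarrow> qmap R a = qmap R b"
    using assms unfolding coarse_def by blast+
  show ?thesis
  proof (rule partition_onI)
    show "\<Union>((`) k ` R) = k ` V" using partition_onD1[OF P] by auto
  next
    fix p q assume "p \<in> (`) k ` R" "q \<in> (`) k ` R" "p \<noteq> q"
    then obtain B1 B2 where b: "B1 \<in> R" "B2 \<in> R" "p = k ` B1" "q = k ` B2" by auto
    show "disjnt p q"
    proof (rule ccontr)
      assume "\<not> disjnt p q"
      then obtain a b where ab: "a \<in> B1" "b \<in> B2" "k a = k b" using b by (auto simp: disjnt_def)
      have V: "a \<in> V" "b \<in> V" using ab b partition_onD1[OF P] by auto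
      then have "qmap R a = qmap R b" using ker[OF V ab(3)] by simp
      then have "\<exists>B\<in>R. a \<in> B \<and> b \<in> B" using qmap_eq_iff[OF P assms(2) V] by simp
      then obtain B where B: "B \<in> R" "a \<in> B" "b \<in> B" by blast
      have "B1 = B2" using part_same_block[OF P b(1) B(1) ab(1) B(2)] part_same_block[OF P b(2) B(1) ab(2) B(3)] by simp
      then show False using b \<open>p \<noteq> q\<close> by simp
    qed
  next
    show "{} \<notin> (`) k ` R" using partition_onD3[OF P] by auto
  qed
qed

lemma pullp_image:
  assumes "R \<in> coarse k V" "finite V"
  shows "pullp k V ((`) k ` R) = R"
proof -
  have P: "partition_on V R" and ker: "\<And>a b. a \<in> V \<Longrightarrow> b \<in> V \<Longrightarrow> k a = k b \<Longrightarrow> qmap R a = qmap R b"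
    using assms unfolding coarse_def by blast+
  have "{x \<in> V. k x \<in> k ` B} = B" if B: "B \<in> R" for B
  proof
    show "B \<subseteq> {x \<in> V. k x \<in> k ` B}" using B partition_onD1[OF P] by auto
    show "{x \<in> V. k x \<in> k ` B} \<subseteq> B"
    proof
      fix x assume "x \<in> {x \<in> V. k x \<in> k ` B}"
      then obtain b where xb: "x \<in> V" "b \<in> B" "k x = k b" by auto
      have bV: "b \<in> V" using xb B partition_onD1[OF P] by auto
      then have "qmap R x = qmap R b" using ker[OF xb(1) bV xb(3)] by simp
      then have "\<exists>B\<in>R. x \<in> B \<and> b \<in> B" using qmap_eq_iff[OF P assms(2) xb(1) bV] by simp
      then obtain B0 where "B0 \<in> R" "x \<in> B0" "b \<in> B0" by blast
      then show "x \<in> B" using part_same_block[OF P B _ xb(2)] by blast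
    qed
  qed
  then show ?thesis unfolding pullp_def by (simp add: image_image)
qed

lemma image_pullp:
  assumes "partition_on (k ` V) R'"
  shows "(`) k ` pullp k V R' = R'"
proof -
  have "k ` {x \<in> V. k x \<in> B} = B" if "B \<in> R'" for B
    using partition_onD1[OF assms] that by auto
  then show ?thesis unfolding pullp_def by (simp add: image_image)
qed

lemma tau0_quot_pullp:
  assumes fin: "finite (tverts D)"
    and wf: "\<And>e. e \<in> tedges D \<Longrightarrow> tsrc D e \<in> tverts D \<and> ttgt D e \<in> tverts D"
    and R': "partition_on (k ` tverts D) R'"
  shows "tau0 \<kappa> (quot D (pullp k (tverts D) R')) = tau0 \<kappa> (quot (vmap k D) R')"
proof -
  define V where "V = tverts D"
  define P where "P = pullp k V R'"
  have P: "partition_on V P" unfolding P_def using pullp_part R' V_def by blast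
  have finV: "finite V" using fin V_def by simp
  have finkV: "finite (k ` V)" using finV by simp
  define gg where "gg = (\<lambda>y. qmap R' (k y))"
  have key: "gg (qmap P x) = qmap R' (k x)" if x: "x \<in> V" for x
  proof -
    have "k x \<in> k ` tverts D" using x V_def by simp
    then obtain B where B: "B \<in> R'" "k x \<in> B" by (rule part_block[OF R'])
    have "{y \<in> V. k y \<in> B} \<in> P" "x \<in> {y \<in> V. k y \<in> B}" unfolding P_def using B x pullp_mem by auto
    then have "qmap P x \<in> {y \<in> V. k y \<in> B}" using qmap_mem_block[OF P finV] by blast
    then have "k (qmap P x) \<in> B" by simp
    then show ?thesis unfolding gg_def using qmap_eq[OF R' B(1)] B(2) by simp
  qed
  have eq0: "quot (vmap k D) R' = vmap (qmap R' \<circ> k) D" unfolding quot_def vmap_def by (simp add: image_comp o_assoc)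
  have eq1: "tau0 \<kappa> (vmap (qmap R' \<circ> k) D) = tau0 \<kappa> (vmap gg (quot D P))"
  proof (rule tau0_cong)
    show "tverts (vmap (qmap R' \<circ> k) D) = tverts (vmap gg (quot D P))"
      using key unfolding quot_def V_def by (force simp: image_image)
    show "tedges (vmap (qmap R' \<circ> k) D) = tedges (vmap gg (quot D P))" unfolding quot_def by simp
    fix e assume "e \<in> tedges (vmap (qmap R' \<circ> k) D)"
    then have "e \<in> tedges D" by simp
    then have "tsrc D e \<in> V" "ttgt D e \<in> V" using wf V_def by auto
    then show "tsrc (vmap (qmap R' \<circ> k) D) e = tsrc (vmap gg (quot D P)) e \<and>
          ttgt (vmap (qmap R' \<circ> k) D) e = ttgt (vmap gg (quot D P)) e \<and>
          tlab (vmap (qmap R' \<circ> k) D) e = tlab (vmap gg (quot D P)) e"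
      using key unfolding quot_def by simp
  qed
  have eq2: "tau0 \<kappa> (vmap gg (quot D P)) = tau0 \<kappa> (quot D P)"
  proof (rule tau0_vmap_inj)
    fix e assume "e \<in> tedges (quot D P)"
    then show "tsrc (quot D P) e \<in> tverts (quot D P) \<and> ttgt (quot D P) e \<in> tverts (quot D P)"
      using wf unfolding quot_def by auto
  next
    show "inj_on gg (tverts (quot D P))"
    proof (rule inj_onI)
      fix a b assume a: "a \<in> tverts (quot D P)" and b: "b \<in> tverts (quot D P)" and e: "gg a = gg b"
      obtain x y where xy: "x \<in> V" "y \<in> V" "a = qmap P x" "b = qmap P y" using a b unfolding quot_def V_def by auto
      have "qmap R' (k x) = qmap R' (k y)" using e key xy by simp
      moreover have "k x \<in> k ` tverts D" "k y \<in> k ` tverts D" using xy V_def by auto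
      ultimately have "\<exists>B\<in>R'. k x \<in> B \<and> k y \<in> B"
        using qmap_eq_iff[OF R' finkV[unfolded V_def]] by blast
      then obtain B where B: "B \<in> R'" "k x \<in> B" "k y \<in> B" by blast
      define C where "C = {z \<in> V. k z \<in> B}"
      have C: "C \<in> P" "x \<in> C" "y \<in> C" unfolding P_def C_def using B pullp_mem xy by auto
      have "\<exists>B\<in>P. x \<in> B \<and> y \<in> B" using C by (intro bexI[of _ C]) simp_all
      then have "qmap P x = qmap P y" using qmap_eq_iff[OF P finV xy(1,2)] by simp
      then show "a = b" using xy by simp
    qed
  qed
  have "tau0 \<kappa> (quot D P) = tau0 \<kappa> (quot (vmap k D) R')" unfolding eq0 eq1 eq2 ..
  then show ?thesis unfolding P_def V_def .
qed

lemma tau_vmap: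
  assumes fin: "finite (tverts D)"
    and wf: "\<And>e. e \<in> tedges D \<Longrightarrow> tsrc D e \<in> tverts D \<and> ttgt D e \<in> tverts D"
  shows "tau \<kappa> (vmap k D) = (\<Sum>R\<in>coarse k (tverts D). tau0 \<kappa> (quot D R))"
  unfolding tau_def vmap_simps
proof (rule sum.reindex_bij_witness[where j = "pullp k (tverts D)" and i = "\<lambda>R. (`) k ` R"])
  fix R' assume "R' \<in> {P. partition_on (k ` tverts D) P}"
  then have R': "partition_on (k ` tverts D) R'" by simp
  show "(`) k ` pullp k (tverts D) R' = R'" by (rule image_pullp[OF R'])
  show "pullp k (tverts D) R' \<in> coarse k (tverts D)" by (rule pullp_coarse[OF R' fin])
  show "tau0 \<kappa> (quot D (pullp k (tverts D) R')) = tau0 \<kappa> (quot (vmap k D) R')"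
    by (rule tau0_quot_pullp[OF fin wf R'])
next
  fix R assume R: "R \<in> coarse k (tverts D)"
  show "pullp k (tverts D) ((`) k ` R) = R" by (rule pullp_image[OF R fin])
  show "(`) k ` R \<in> {P. partition_on (k ` tverts D) P}" using image_part[OF R fin] by simp
qed

definition dsum :: "'a gmon \<Rightarrow> 'a gmon \<Rightarrow> 'a tgraph" where
  "dsum t u = \<lparr>tverts = (\<lambda>v. 2 * v) ` tverts t \<union> (\<lambda>v. 2 * v + 1) ` tverts u,
      tedges = (\<lambda>e. 2 * e) ` tedges t \<union> (\<lambda>e. 2 * e + 1) ` tedges u,
      tsrc = (\<lambda>e. if even e then 2 * tsrc t (e div 2) else 2 * tsrc u (e div 2) + 1),
      ttgt = (\<lambda>e. if even e then 2 * ttgt t (e div 2) else 2 * ttgt u (e div 2) + 1),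
      tlab = (\<lambda>e. if even e then tlab t (e div 2) else tlab u (e div 2))\<rparr>"

definition phi :: "nat \<Rightarrow> nat \<Rightarrow> nat \<Rightarrow> nat \<Rightarrow> nat \<Rightarrow> nat" where
  "phi p1 p2 p3 p4 c = (let f = (\<lambda>v. if v = p1 then p2 else v) in
     (if f c = f p3 then f p4 else f c))"

definition qq :: "nat set set \<Rightarrow> nat \<Rightarrow> nat" where
  "qq P n = (if even n then 2 * qmap P (n div 2) else n)"

lemma vmap_vmap: "vmap f (vmap g G) = vmap (f \<circ> g) G"
  unfolding vmap_def by (simp add: image_comp o_assoc)

definition gf :: "'a gmon \<Rightarrow> 'a gmon \<Rightarrow> nat \<Rightarrow> nat" where
  "gf t u = (\<lambda>v. if v = 2 * gout u + 1 then 2 * gin t else v)"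

definition PHI :: "'a gmon \<Rightarrow> 'a gmon \<Rightarrow> nat \<Rightarrow> nat" where
  "PHI t u = (\<lambda>v. if v = gout (gprod t u) then gin (gprod t u) else v) \<circ> gf t u"

lemma gprod_sel:
  "tverts (gprod t u) = gf t u ` ((\<lambda>v. 2 * v) ` tverts t \<union> (\<lambda>v. 2 * v + 1) ` tverts u)"
  "tedges (gprod t u) = (\<lambda>e. 2 * e) ` tedges t \<union> (\<lambda>e. 2 * e + 1) ` tedges u"
  "tsrc (gprod t u) = gf t u \<circ> (\<lambda>e. if even e then 2 * tsrc t (e div 2) else 2 * tsrc u (e div 2) + 1)"
  "ttgt (gprod t u) = gf t u \<circ> (\<lambda>e. if even e then 2 * ttgt t (e div 2) else 2 * ttgt u (e div 2) + 1)"
  "tlab (gprod t u) = (\<lambda>e. if even e then tlab t (e div 2) else tlab u (e div 2))"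
  "gin (gprod t u) = gf t u (2 * gin u + 1)"
  "gout (gprod t u) = gf t u (2 * gout t)"
  unfolding gprod_def Let_def gf_def by (simp_all add: o_def del: if_image_distrib)

lemma delta_gprod: "delta (gprod t u) = vmap (PHI t u) (dsum t u)"
proof -
  have "delta (gprod t u) = \<lparr>tverts = (\<lambda>v. if v = gout (gprod t u) then gin (gprod t u) else v) ` tverts (gprod t u),
     tedges = tedges (gprod t u),
     tsrc = (\<lambda>v. if v = gout (gprod t u) then gin (gprod t u) else v) \<circ> tsrc (gprod t u),
     ttgt = (\<lambda>v. if v = gout (gprod t u) then gin (gprod t u) else v) \<circ> ttgt (gprod t u),
     tlab = tlab (gprod t u)\<rparr>" unfolding delta_def Let_def by simp
  also have "\<dots> = vmap (PHI t u) (dsum t u)"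
    unfolding vmap_def dsum_def PHI_def gprod_sel(1-5)
    by (simp only: tgraph.select_convs tgraph.update_convs image_comp o_assoc)
  finally show ?thesis .
qed

lemma PHI_eq: "PHI t u c = phi (2 * gout u + 1) (2 * gin t) (2 * gout t) (2 * gin u + 1) c"
  unfolding PHI_def phi_def gf_def gprod_sel(6,7) Let_def by simp

lemma dsum_gquot: "dsum (gquot t P) u = vmap (qq P) (dsum t u)"
proof -
  have e: "qq P (2 * x) = 2 * qmap P x" "qq P (2 * x + 1) = 2 * x + 1" "qq P (Suc (2 * x)) = Suc (2 * x)" for x unfolding qq_def by simp_all
  have "qq P (if even e then a else b) = (if even e then qq P a else qq P b)" for e a b by simp
  show ?thesis
  unfolding dsum_def gquot_def quot_def vmap_def
  by (simp add: image_comp image_Un fun_eq_iff o_def e del: if_image_distrib)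
qed

lemma gquot_sel[simp]:
  "tverts (gquot t P) = qmap P ` tverts t" "tedges (gquot t P) = tedges t"
  "tsrc (gquot t P) = qmap P \<circ> tsrc t" "ttgt (gquot t P) = qmap P \<circ> ttgt t"
  "tlab (gquot t P) = tlab t" "gin (gquot t P) = qmap P (gin t)" "gout (gquot t P) = qmap P (gout t)"
  unfolding gquot_def quot_def vmap_def by simp_all

lemma quot_sel[simp]:
  "tverts (quot G P) = qmap P ` tverts G" "tedges (quot G P) = tedges G"
  "tsrc (quot G P) = qmap P \<circ> tsrc G" "ttgt (quot G P) = qmap P \<circ> ttgt G"
  "tlab (quot G P) = tlab G"
  unfolding quot_def vmap_def by simp_all

definition good :: "'a gmon \<Rightarrow> nat set set \<Rightarrow> bool" where
  "good t Q \<longleftrightarrow> partition_on (tverts t) Q \<and>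
     (\<forall>x\<in>tverts t. \<forall>y\<in>tverts t. qmap Q x \<noteq> qmap Q y \<longrightarrow> cut2 (quot t Q) (qmap Q x) (qmap Q y))"

definition pirel :: "'a gmon \<Rightarrow> (nat \<times> nat) set" where
  "pirel t = {(x, y). x \<in> tverts t \<and> y \<in> tverts t \<and> (\<forall>Q. good t Q \<longrightarrow> qmap Q x = qmap Q y)}"

definition piP :: "'a gmon \<Rightarrow> nat set set" where
  "piP t = tverts t // pirel t"

lemma pirel_equiv: "equiv (tverts t) (pirel t)"
  unfolding equiv_def refl_on_def sym_def trans_def pirel_def by auto

lemma piP_part: "partition_on (tverts t) (piP t)"
  unfolding piP_def by (rule partition_on_quotient[OF pirel_equiv])

lemma piP_eq_iff:
  assumes fin: "finite (tverts t)" and xy: "x \<in> tverts t" "y \<in> tverts t"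
  shows "qmap (piP t) x = qmap (piP t) y \<longleftrightarrow> (x, y) \<in> pirel t"
proof -
  have "(\<exists>B\<in>piP t. x \<in> B \<and> y \<in> B) \<longleftrightarrow> (x, y) \<in> pirel t"
  proof
    assume "\<exists>B\<in>piP t. x \<in> B \<and> y \<in> B"
    then obtain z where z: "z \<in> tverts t" "x \<in> pirel t `` {z}" "y \<in> pirel t `` {z}"
      unfolding piP_def quotient_def by blast
    then have "(z, x) \<in> pirel t" "(z, y) \<in> pirel t" by auto
    then show "(x, y) \<in> pirel t" using pirel_equiv[of t] unfolding equiv_def sym_def trans_def by blast
  next
    assume a: "(x, y) \<in> pirel t"
    have "(x, x) \<in> pirel t" using xy(1) unfolding pirel_def by simp
    then have "x \<in> pirel t `` {x}" "y \<in> pirel t `` {x}" using a by auto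
    moreover have "pirel t `` {x} \<in> piP t" unfolding piP_def quotient_def using xy(1) by blast
    ultimately show "\<exists>B\<in>piP t. x \<in> B \<and> y \<in> B" by blast
  qed
  then show ?thesis using qmap_eq_iff[OF piP_part fin xy] by simp
qed

lemma good_refines:
  assumes fin: "finite (tverts t)" and xy: "x \<in> tverts t" "y \<in> tverts t"
    and g: "good t Q" and e: "qmap (piP t) x = qmap (piP t) y"
  shows "qmap Q x = qmap Q y"
  using piP_eq_iff[OF fin xy] e g unfolding pirel_def by simp

lemma lam_bounds:
  assumes fin: "finite (tedges G)" and ab: "a \<noteq> b" and r: "(adj G {})\<^sup>*\<^sup>* a b" and c: "cut2 G a b"
  shows "lam G a b \<in> {1, 2}"
proof -
  define S where "S = {card F | F. F \<subseteq> tedges G \<and> \<not> (adj G F)\<^sup>*\<^sup>* a b}"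
  have fS: "finite S"
  proof (rule finite_subset)
    show "S \<subseteq> {0..card (tedges G)}" unfolding S_def using card_mono[OF fin] by auto
  qed simp
  obtain F where F: "F \<subseteq> tedges G" "finite F" "card F \<le> 2" "\<not> (adj G F)\<^sup>*\<^sup>* a b"
    using c unfolding cut2_def by blast
  have FS: "card F \<in> S" unfolding S_def using F by blast
  have le2: "Min S \<le> 2" using Min_le[OF fS FS] F(3) by simp
  have ne: "S \<noteq> {}" using FS by blast
  have ge1: "1 \<le> s" if "s \<in> S" for s
  proof (rule ccontr)
    assume "\<not> 1 \<le> s"
    then have s0: "s = 0" by simp
    from that obtain F' where F': "s = card F'" "F' \<subseteq> tedges G" "\<not> (adj G F')\<^sup>*\<^sup>* a b" unfolding S_def by blast
    have "finite F'" using F'(2) fin finite_subset by blast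
    then have "F' = {}" using F'(1) s0 by simp
    then show False using F'(3) r by simp
  qed
  have "1 \<le> Min S" using ge1 Min_in[OF fS ne] by blast
  then show ?thesis using le2 unfolding lam_def S_def[symmetric] by auto
qed

lemma piP_idem:
  assumes fin: "finite (tverts t)" and x: "x \<in> tverts t"
  shows "qmap (piP t) (qmap (piP t) x) = qmap (piP t) x" "qmap (piP t) x \<in> tverts t"
  using qmap_idem[OF piP_part fin x] qmap_mem[OF piP_part fin x] by simp_all

lemma quasi_piP:
  assumes wf: "gm_wf t"
  shows "quasi_cactus (gquot t (piP t))"
  unfolding quasi_cactus_def
proof (intro ballI impI)
  have fin: "finite (tverts t)" "finite (tedges t)"
    and ep: "\<And>e. e \<in> tedges t \<Longrightarrow> tsrc t e \<in> tverts t \<and> ttgt t e \<in> tverts t"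
    and conn: "\<And>x y. x \<in> tverts t \<Longrightarrow> y \<in> tverts t \<Longrightarrow> (adj t {})\<^sup>*\<^sup>* x y"
    using wf unfolding gm_wf_def tg_wf_def tg_connected_def by auto
  let ?p = "qmap (piP t)"
  fix a b assume a: "a \<in> tverts (gquot t (piP t))" and b: "b \<in> tverts (gquot t (piP t))" and ab: "a \<noteq> b"
  obtain x y where xy: "x \<in> tverts t" "y \<in> tverts t" "a = ?p x" "b = ?p y" using a b by auto
  have "(x, y) \<notin> pirel t" using piP_eq_iff[OF fin(1) xy(1,2)] ab xy by simp
  then obtain Q where Q: "good t Q" "qmap Q x \<noteq> qmap Q y" using xy unfolding pirel_def by auto
  have QP: "partition_on (tverts t) Q" using Q(1) unfolding good_def by simp
  have c: "cut2 (quot t Q) (qmap Q x) (qmap Q y)" using Q xy unfolding good_def by blast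
  have rho: "qmap Q (?p z) = qmap Q z" if "z \<in> tverts t" for z
    using good_refines[OF fin(1) piP_idem(2)[OF fin(1) that] that Q(1)] piP_idem(1)[OF fin(1) that] by simp
  have "cut2 (gquot t (piP t)) a b"
  proof (rule cut2_hom[where \<rho> = "qmap Q" and \<eta> = id and K = "quot t Q"])
    show "cut2 (quot t Q) (qmap Q a) (qmap Q b)" using c rho xy by simp
    show "inj_on id (tedges (gquot t (piP t)))" by simp
    fix e assume "e \<in> tedges (gquot t (piP t))"
    then have "e \<in> tedges t" by simp
    then show "id e \<in> tedges (quot t Q) \<and> qmap Q (tsrc (gquot t (piP t)) e) = tsrc (quot t Q) (id e) \<and>
         qmap Q (ttgt (gquot t (piP t)) e) = ttgt (quot t Q) (id e)" using rho ep by simp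
  qed
  moreover have "(adj (gquot t (piP t)) {})\<^sup>*\<^sup>* (?p x) (?p y)"
    by (rule reach_hom[OF conn[OF xy(1,2)]]) simp
  ultimately show "lam (gquot t (piP t)) a b \<in> {1, 2}"
    using lam_bounds[of "gquot t (piP t)" a b] fin ab xy by simp
qed

lemma dsum_sel[simp]:
  "tverts (dsum t u) = (\<lambda>v. 2 * v) ` tverts t \<union> (\<lambda>v. 2 * v + 1) ` tverts u"
  "tedges (dsum t u) = (\<lambda>e. 2 * e) ` tedges t \<union> (\<lambda>e. 2 * e + 1) ` tedges u"
  "tsrc (dsum t u) = (\<lambda>e. if even e then 2 * tsrc t (e div 2) else 2 * tsrc u (e div 2) + 1)"
  "ttgt (dsum t u) = (\<lambda>e. if even e then 2 * ttgt t (e div 2) else 2 * ttgt u (e div 2) + 1)"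
  unfolding dsum_def by simp_all

lemma gm_wf_facts:
  assumes "gm_wf t"
  shows "finite (tverts t)" "finite (tedges t)"
    "\<And>e. e \<in> tedges t \<Longrightarrow> tsrc t e \<in> tverts t \<and> ttgt t e \<in> tverts t"
    "gin t \<in> tverts t" "gout t \<in> tverts t"
    "\<And>x y. x \<in> tverts t \<Longrightarrow> y \<in> tverts t \<Longrightarrow> (adj t {})\<^sup>*\<^sup>* x y"
  using assms unfolding gm_wf_def tg_wf_def tg_connected_def by auto

lemma dsum_mem:
  "n \<in> tverts (dsum t u) \<longleftrightarrow> (even n \<and> n div 2 \<in> tverts t) \<or> (odd n \<and> n div 2 \<in> tverts u)"
proof
  assume "n \<in> tverts (dsum t u)"
  then show "(even n \<and> n div 2 \<in> tverts t) \<or> (odd n \<and> n div 2 \<in> tverts u)" by auto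
next
  assume h: "(even n \<and> n div 2 \<in> tverts t) \<or> (odd n \<and> n div 2 \<in> tverts u)"
  show "n \<in> tverts (dsum t u)"
  proof (cases "even n")
    case True
    then have "n = 2 * (n div 2)" by simp
    then show ?thesis using h True by (metis UnI1 dsum_sel(1) image_eqI)
  next
    case False
    then have "n = 2 * (n div 2) + 1" by simp
    then show ?thesis using h False by (metis UnI2 dsum_sel(1) image_eqI)
  qed
qed

lemma dsum_wf:
  assumes "gm_wf t" "gm_wf u"
  shows "finite (tverts (dsum t u))" "finite (tedges (dsum t u))"
    "\<And>e. e \<in> tedges (dsum t u) \<Longrightarrow> tsrc (dsum t u) e \<in> tverts (dsum t u) \<and> ttgt (dsum t u) e \<in> tverts (dsum t u)"
  using gm_wf_facts[OF assms(1)] gm_wf_facts[OF assms(2)] by (auto simp: dsum_mem)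

lemma qq_facts:
  assumes "finite (tverts t)" "a \<in> tverts (dsum t u)"
  shows "qq (piP t) a \<in> tverts (dsum t u)" "qq (piP t) (qq (piP t) a) = qq (piP t) a"
  using assms piP_idem[OF assms(1)] unfolding qq_def by (auto simp: dsum_mem)

lemma cactus_kerq:
  assumes wt: "gm_wf t" and wu: "gm_wf u"
    and R: "partition_on (tverts (dsum t u)) R"
    and oc: "oriented_cactus (quot (dsum t u) R)"
    and a: "a \<in> tverts (dsum t u)" and b: "b \<in> tverts (dsum t u)"
    and e: "qq (piP t) a = qq (piP t) b"
  shows "qmap R a = qmap R b"
proof -
  define D where "D = dsum t u"
  define Vt where "Vt = tverts t"
  define VD where "VD = tverts D"
  have finD: "finite VD" unfolding VD_def D_def using dsum_wf[OF wt wu] by simp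
  have finVt: "finite Vt" unfolding Vt_def using gm_wf_facts[OF wt] by simp
  have R': "partition_on VD R" using R unfolding VD_def D_def .
  have twoVD: "2 * x \<in> VD" if "x \<in> Vt" for x using that unfolding VD_def D_def Vt_def by simp
  define blk where "blk = (\<lambda>B. {x \<in> Vt. 2 * x \<in> B})"
  define Q where "Q = blk ` R - {{}}"
  have blkQ: "blk B \<in> Q" "x \<in> blk B" if "B \<in> R" "x \<in> Vt" "2 * x \<in> B" for B x
  proof -
    show xb: "x \<in> blk B" unfolding blk_def using that by simp
    then have "blk B \<noteq> {}" by blast
    then show "blk B \<in> Q" unfolding Q_def using that(1) by blast
  qed
  have QP: "partition_on Vt Q"
  proof (rule partition_onI)
    show "\<Union>Q = Vt"
    proof
      show "\<Union>Q \<subseteq> Vt" unfolding Q_def blk_def by auto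
      show "Vt \<subseteq> \<Union>Q"
      proof
        fix x assume x: "x \<in> Vt"
        then obtain B where B: "B \<in> R" "2 * x \<in> B" using part_block[OF R' twoVD[OF x]] by metis
        then show "x \<in> \<Union>Q" using blkQ[OF B(1) x B(2)] by blast
      qed
    qed
  next
    fix p q assume pq: "p \<in> Q" "q \<in> Q" "p \<noteq> q"
    then obtain B1 B2 where b: "B1 \<in> R" "B2 \<in> R" "p = blk B1" "q = blk B2" unfolding Q_def by blast
    then have "B1 \<noteq> B2" using pq by blast
    then have "B1 \<inter> B2 = {}" using partition_onD2[OF R'] b by (auto simp: disjoint_def)
    then show "disjnt p q" using b unfolding blk_def disjnt_def by blast
  next
    show "{} \<notin> Q" unfolding Q_def by blast
  qed
  have key: "qmap R (2 * qmap Q x) = qmap R (2 * x)" if x: "x \<in> Vt" for x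
  proof -
    obtain B where B: "B \<in> R" "2 * x \<in> B" using part_block[OF R' twoVD[OF x]] by metis
    have "qmap Q x \<in> blk B" using qmap_mem_block[OF QP finVt blkQ[OF B(1) x B(2)]] .
    then have "2 * qmap Q x \<in> B" unfolding blk_def by simp
    then show ?thesis using qmap_eq[OF R' B(1)] B(2) by simp
  qed
  have eqv: "qmap Q x = qmap Q y \<longleftrightarrow> qmap R (2 * x) = qmap R (2 * y)" if xy: "x \<in> Vt" "y \<in> Vt" for x y
  proof
    assume "qmap Q x = qmap Q y"
    then show "qmap R (2 * x) = qmap R (2 * y)" using key[OF xy(1)] key[OF xy(2)] by simp
  next
    assume "qmap R (2 * x) = qmap R (2 * y)"
    then have "\<exists>B\<in>R. 2 * x \<in> B \<and> 2 * y \<in> B" using qmap_eq_iff[OF R' finD twoVD[OF xy(1)] twoVD[OF xy(2)]] by simp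
    then obtain B where B: "B \<in> R" "2 * x \<in> B" "2 * y \<in> B" by blast
    have "blk B \<in> Q" "x \<in> blk B" "y \<in> blk B" using blkQ B xy by auto
    then have "\<exists>C\<in>Q. x \<in> C \<and> y \<in> C" by blast
    then show "qmap Q x = qmap Q y" using qmap_eq_iff[OF QP finVt xy] by simp
  qed
  define K where "K = quot D R"
  have cacK: "is_cactus K" using oc unfolding K_def D_def oriented_cactus_def by simp
  have wfK: "tsrc K e \<in> tverts K \<and> ttgt K e \<in> tverts K" if "e \<in> tedges K" for e
    using that dsum_wf(3)[OF wt wu] unfolding K_def D_def by auto
  have gQ: "good t Q"
    unfolding good_def
  proof (intro conjI ballI impI)
    show "partition_on (tverts t) Q" using QP unfolding Vt_def .
    fix x y assume x: "x \<in> tverts t" and y: "y \<in> tverts t" and ne: "qmap Q x \<noteq> qmap Q y"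
    have x': "x \<in> Vt" and y': "y \<in> Vt" using x y unfolding Vt_def .
    show "cut2 (quot t Q) (qmap Q x) (qmap Q y)"
    proof (rule cut2_hom[where \<rho> = "\<lambda>z. qmap R (2 * z)" and \<eta> = "\<lambda>e. 2 * e" and K = K])
      have "cut2 K (qmap R (2 * x)) (qmap R (2 * y))"
      proof (rule cactus_cut2[OF cacK wfK])
        show "qmap R (2 * x) \<in> tverts K" "qmap R (2 * y) \<in> tverts K"
          using twoVD[OF x'] twoVD[OF y'] unfolding K_def VD_def by auto
        show "qmap R (2 * x) \<noteq> qmap R (2 * y)" using eqv[OF x' y'] ne by simp
      qed
      then show "cut2 K (qmap R (2 * qmap Q x)) (qmap R (2 * qmap Q y))" using key[OF x'] key[OF y'] by simp
      show "inj_on (\<lambda>e. 2 * e) (tedges (quot t Q))" by (simp add: inj_on_def)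
      fix e assume "e \<in> tedges (quot t Q)"
      then have eT: "e \<in> tedges t" by simp
      then have sV: "tsrc t e \<in> Vt" "ttgt t e \<in> Vt" using gm_wf_facts(3)[OF wt] unfolding Vt_def by auto
      have "2 * e \<in> tedges K" unfolding K_def D_def using eT by simp
      moreover have "tsrc K (2 * e) = qmap R (2 * tsrc t e)" "ttgt K (2 * e) = qmap R (2 * ttgt t e)"
        unfolding K_def D_def by simp_all
      ultimately show "2 * e \<in> tedges K \<and> qmap R (2 * tsrc (quot t Q) e) = tsrc K (2 * e) \<and>
          qmap R (2 * ttgt (quot t Q) e) = ttgt K (2 * e)"
        using key[OF sV(1)] key[OF sV(2)] by simp
    qed
  qed
  have finT: "finite (tverts t)" using finVt unfolding Vt_def .
  show ?thesis
  proof (cases "even a")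
    case True
    note ea = True
    show ?thesis
    proof (cases "even b")
      case True
      have xa: "a div 2 \<in> tverts t" using a ea dsum_mem[of a t u] by blast
      have xb: "b div 2 \<in> tverts t" using b True dsum_mem[of b t u] by blast
      have "qmap (piP t) (a div 2) = qmap (piP t) (b div 2)" using e ea True unfolding qq_def by simp
      then have "qmap Q (a div 2) = qmap Q (b div 2)" using good_refines[OF finT xa xb gQ] by simp
      then have "qmap R (2 * (a div 2)) = qmap R (2 * (b div 2))" using eqv xa xb unfolding Vt_def by simp
      then show ?thesis using ea True by simp
    next
      case False
      then have "b = 2 * qmap (piP t) (a div 2)" using e ea unfolding qq_def by simp
      then have "even b" by simp
      then show ?thesis using False by simp
    qed
  next
    case False
    note oa = False
    show ?thesis
    proof (cases "even b")
      case True
      then have "a = 2 * qmap (piP t) (b div 2)" using e oa unfolding qq_def by simp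
      then have "even a" by simp
      then show ?thesis using oa by simp
    next
      case False
      then have "a = b" using e oa unfolding qq_def by simp
      then show ?thesis by simp
    qed
  qed
qed

lemma phi_12: "phi p1 p2 p3 p4 p1 = phi p1 p2 p3 p4 p2"
  unfolding phi_def Let_def by simp

lemma phi_34: "phi p1 p2 p3 p4 p3 = phi p1 p2 p3 p4 p4"
  unfolding phi_def Let_def by simp

lemma phi_E:
  assumes "qmap R p1 = qmap R p2" "qmap R p3 = qmap R p4"
  shows "qmap R (phi p1 p2 p3 p4 c) = qmap R c"
proof -
  define f where "f = (\<lambda>v. if v = p1 then p2 else v)"
  have f: "qmap R (f v) = qmap R v" for v unfolding f_def using assms(1) by simp
  have "phi p1 p2 p3 p4 c = (if f c = f p3 then f p4 else f c)" unfolding phi_def f_def Let_def by simp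
  moreover have "qmap R (f p4) = qmap R (f c)" if "f c = f p3"
    using f[of p4] f[of p3] assms(2) that by metis
  ultimately show ?thesis using f[of c] by auto
qed

lemma psi_eq:
  assumes wt: "gm_wf t" and wu: "gm_wf u"
  shows "psi \<kappa> (gprod (gquot t (piP t)) u) = psi \<kappa> (gprod t u)"
proof -
  define s where "s = gquot t (piP t)"
  define D where "D = dsum t u"
  define V where "V = tverts D"
  define q where "q = qq (piP t)"
  define p1 where "p1 = 2 * gout u + 1"
  define p2 where "p2 = 2 * gin t"
  define p3 where "p3 = 2 * gout t"
  define p4 where "p4 = 2 * gin u + 1"
  define kt where "kt = phi p1 p2 p3 p4"
  define ks where "ks = phi p1 (q p2) (q p3) p4 \<circ> q"
  have finD: "finite V" and wfD: "\<And>e. e \<in> tedges D \<Longrightarrow> tsrc D e \<in> V \<and> ttgt D e \<in> V"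
    using dsum_wf[OF wt wu] unfolding V_def D_def by auto
  have finT: "finite (tverts t)" using gm_wf_facts[OF wt] by simp
  have qp: "q p1 = p1" "q p4 = p4" "q p2 = 2 * qmap (piP t) (gin t)" "q p3 = 2 * qmap (piP t) (gout t)"
    unfolding q_def qq_def p1_def p2_def p3_def p4_def by simp_all
  have pV: "p1 \<in> V" "p2 \<in> V" "p3 \<in> V" "p4 \<in> V"
    unfolding V_def D_def p1_def p2_def p3_def p4_def using gm_wf_facts[OF wt] gm_wf_facts[OF wu] by auto
  have qV: "q a \<in> V" "q (q a) = q a" if "a \<in> V" for a
    using qq_facts[OF finT] that unfolding q_def V_def D_def by auto
  have PHIt: "PHI t u = kt" unfolding kt_def p1_def p2_def p3_def p4_def by (simp add: fun_eq_iff PHI_eq)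
  have q23: "q (2 * gin t) = 2 * qmap (piP t) (gin t)" "q (2 * gout t) = 2 * qmap (piP t) (gout t)"
    unfolding q_def qq_def by simp_all
  have PHIs: "PHI s u = phi p1 (q p2) (q p3) p4" unfolding s_def p1_def p2_def p3_def p4_def
    by (simp add: fun_eq_iff PHI_eq q23)
  have "psi \<kappa> (gprod s u) = tau \<kappa> (vmap ks D)"
    unfolding psi_def delta_gprod s_def dsum_gquot vmap_vmap
    by (simp add: PHIs[unfolded s_def] ks_def q_def D_def)
  also have "\<dots> = (\<Sum>R\<in>coarse ks V. tau0 \<kappa> (quot D R))"
    unfolding V_def by (rule tau_vmap) (use finD wfD V_def in auto)
  finally have S: "psi \<kappa> (gprod s u) = (\<Sum>R\<in>coarse ks V. tau0 \<kappa> (quot D R))" .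
  have "psi \<kappa> (gprod t u) = tau \<kappa> (vmap kt D)"
    unfolding psi_def delta_gprod PHIt D_def ..
  also have "\<dots> = (\<Sum>R\<in>coarse kt V. tau0 \<kappa> (quot D R))"
    unfolding V_def by (rule tau_vmap) (use finD wfD V_def in auto)
  finally have T: "psi \<kappa> (gprod t u) = (\<Sum>R\<in>coarse kt V. tau0 \<kappa> (quot D R))" .
  have fin: "finite (coarse kt V)"
    using finitely_many_partition_on[OF finD] unfolding coarse_def by (rule finite_subset[rotated]) auto
  have sub: "coarse ks V \<subseteq> coarse kt V"
  proof
    fix R assume R: "R \<in> coarse ks V"
    then have RP: "partition_on V R" and ker: "\<And>a b. a \<in> V \<Longrightarrow> b \<in> V \<Longrightarrow> ks a = ks b \<Longrightarrow> qmap R a = qmap R b"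
      unfolding coarse_def by blast+
    have "ks p1 = ks p2" unfolding ks_def using qp phi_12 by simp
    then have e1: "qmap R p1 = qmap R p2" using ker[OF pV(1,2)] by blast
    have "ks p3 = ks p4" unfolding ks_def using qp phi_34 by simp
    then have e2: "qmap R p3 = qmap R p4" using ker[OF pV(3,4)] by blast
    have E: "qmap R (kt c) = qmap R c" for c unfolding kt_def using phi_E[OF e1 e2] .
    have "qmap R a = qmap R b" if "a \<in> V" "b \<in> V" "kt a = kt b" for a b
      using E[of a] E[of b] that(3) by metis
    then show "R \<in> coarse kt V" unfolding coarse_def using RP by blast
  qed
  have zero: "tau0 \<kappa> (quot D R) = 0" if R: "R \<in> coarse kt V - coarse ks V" for R
  proof (rule ccontr)
    assume nz: "tau0 \<kappa> (quot D R) \<noteq> 0"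
    then have oc: "oriented_cactus (quot D R)" unfolding tau0_def by (auto split: if_splits)
    have RP: "partition_on V R" and ker: "\<And>a b. a \<in> V \<Longrightarrow> b \<in> V \<Longrightarrow> kt a = kt b \<Longrightarrow> qmap R a = qmap R b"
      using R unfolding coarse_def by blast+
    have kq: "qmap R a = qmap R b" if "a \<in> V" "b \<in> V" "q a = q b" for a b
      using cactus_kerq[OF wt wu RP[unfolded V_def D_def] oc[unfolded D_def]] that
      unfolding V_def D_def q_def by blast
    have kq1: "qmap R (q a) = qmap R a" if "a \<in> V" for a
      using kq[OF qV(1)[OF that] that] qV(2)[OF that] by simp
    have "kt p1 = kt p2" unfolding kt_def by (rule phi_12)
    then have "qmap R p1 = qmap R p2" using ker[OF pV(1,2)] by blast
    then have e1: "qmap R p1 = qmap R (q p2)" using kq1[OF pV(2)] by simp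
    have "kt p3 = kt p4" unfolding kt_def by (rule phi_34)
    then have "qmap R p3 = qmap R p4" using ker[OF pV(3,4)] by blast
    then have e2: "qmap R (q p3) = qmap R p4" using kq1[OF pV(3)] by simp
    have E: "qmap R (phi p1 (q p2) (q p3) p4 c) = qmap R c" for c using phi_E[OF e1 e2] .
    have "qmap R a = qmap R b" if "a \<in> V" "b \<in> V" "ks a = ks b" for a b
    proof -
      have "qmap R a = qmap R (q a)" using kq1[OF that(1)] by simp
      also have "\<dots> = qmap R (ks a)" using E[of "q a"] unfolding ks_def by simp
      also have "\<dots> = qmap R (ks b)" using that(3) by simp
      also have "\<dots> = qmap R (q b)" using E[of "q b"] unfolding ks_def by simp
      also have "\<dots> = qmap R b" using kq1[OF that(2)] by simp
      finally show ?thesis .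
    qed
    then have "R \<in> coarse ks V" unfolding coarse_def using RP by blast
    then show False using R by blast
  qed
  have "(\<Sum>R\<in>coarse ks V. tau0 \<kappa> (quot D R)) = (\<Sum>R\<in>coarse kt V. tau0 \<kappa> (quot D R))"
    by (rule sum.mono_neutral_left[OF fin sub]) (use zero in blast)
  then show ?thesis using S T unfolding s_def by simp
qed

theorem corollary2p9:
  fixes sc :: "complex \<Rightarrow> 'a::ring_1 \<Rightarrow> 'a"
    and \<phi> :: "'a \<Rightarrow> complex"
    and \<kappa> :: "'a list \<Rightarrow> complex"
    and t :: "'a gmon"
  assumes "complex_algebra sc"
    and "tracial_state sc \<phi>"
    and "free_cumulants \<phi> \<kappa>"
    and "gm_wf t"
  shows "\<exists>P. partition_on (tverts t) P \<and> quasi_cactus (gquot t P) \<and> cong_psi \<kappa> (gquot t P) t"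
proof (intro exI conjI)
  show "partition_on (tverts t) (piP t)" by (rule piP_part)
  show "quasi_cactus (gquot t (piP t))" by (rule quasi_piP[OF assms(4)])
  show "cong_psi \<kappa> (gquot t (piP t)) t"
    unfolding cong_psi_def using psi_eq[OF assms(4)] by blast
qed

end
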